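(* Fix $A\in\mathbb R$, $T>0$ and $b\ge0$. There is $C=C(A,b,T)$, not depending on $\epsilon$, such that for all sufficiently small $\epsilon>0$, all $t\in[0,\epsilon^{-2}T]$, all $v\in[0,1]$, all $x,y\in\mathbb Z_{\ge0}$ and all integers $n$ with $|n|\le\lceil t^{1/2}\rceil$ and $x+n\ge0$, $$|\mathbf p_t^R(x+n,y)-\mathbf p_t^R(x,y)|\le C\,(1\wedge t^{-(1+v)/2})\,|n|^v\,e^{-b|x-y|(1\wedge t^{-1/2})}.$$ When $b=0$ this holds for all integers $n$ with $x+n\ge0$.
   Context: Let $p_t(x)$, $x\in\mathbb Z$, denote the whole-line semi-discrete heat kernel, i.e. the solution of $\partial_tp_t(x)=\frac12\Delta p_t(x)$, $p_0(x)=1_{\{x=0\}}$, where $\Delta f(x)=f(x+1)+f(x-1)-2f(x)$. For $\epsilon>0$ let $\mu_A=1-A\epsilon$. The half-line Robin heat kernel is, for $t\ge0$ and $x,y\in\mathbb Z_{\ge0}$, $$\mathbf p_t^R(x,y)=p_t(x-y)+\mu_Ap_t(x+y+1)+(1-\mu_A^{-2})\sum_{z=2}^\infty p_t(x+y+z)\mu_A^z.$$ *)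

theory Defs
  imports "HOL-Analysis.Analysis"
begin

definition srw_prob :: "nat \<Rightarrow> int \<Rightarrow> real" where
  "srw_prob k x = (if \<bar>x\<bar> \<le> int k \<and> even (int k + x)
      then real (k choose nat ((int k + \<bar>x\<bar>) div 2)) / 2 ^ k else 0)"

text \<open>Whole-line semi-discrete heat kernel p_t(x): the unique bounded solution of
  d/dt p_t = (1/2) Laplacian p_t with p_0 = indicator of 0, i.e. the transition kernel of the
  continuous-time simple random walk with total jump rate 1 (Poissonised simple random walk).\<close>
definition heat_kernel :: "real \<Rightarrow> int \<Rightarrow> real" where
  "heat_kernel t x = (\<Sum>k. exp (- t) * t ^ k / fact k * srw_prob k x)"

definition muA :: "real \<Rightarrow> real \<Rightarrow> real" where
  "muA A \<epsilon> = 1 - A * \<epsilon>"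

text \<open>Half-line Robin heat kernel; the sum over z \<ge> 2 is reindexed as z = j + 2.\<close>
definition robin_kernel :: "real \<Rightarrow> real \<Rightarrow> real \<Rightarrow> int \<Rightarrow> int \<Rightarrow> real" where
  "robin_kernel A \<epsilon> t x y =
     heat_kernel t (x - y) + muA A \<epsilon> * heat_kernel t (x + y + 1)
     + (1 - (muA A \<epsilon>) powi (-2)) *
       (\<Sum>j. heat_kernel t (x + y + int j + 2) * (muA A \<epsilon>) ^ (j + 2))"

definition min1_pow :: "real \<Rightarrow> real \<Rightarrow> real" where
  "min1_pow t a = (if t = 0 then 1 else min 1 (t powr (- a)))"

end

theory Submission
  imports Defs "HOL-Analysis.Analysis"
begin

lemma cos_quart: "cos (x::real) \<le> 1 - x^2/2 + x^4/24"
proof -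
  obtain t where "cos x = (\<Sum>m<4. cos_coeff m * x ^ m) + (cos(t + 1/2 * real 4 * pi) / fact 4) * x ^ 4"
    using Maclaurin_cos_expansion[of x 4] by blast
  moreover have "(\<Sum>m<4. cos_coeff m * x ^ m) = 1 - x^2/2"
    apply (simp add: numeral_eq_Suc cos_coeff_def lessThan_Suc) by presburger
  moreover have "cos(t + 1/2 * real 4 * pi) / fact 4 * x^4 \<le> x^4/24"
  proof -
    have "cos(t + 1/2 * real 4 * pi) * x^4 \<le> 1 * x^4" by (rule mult_right_mono) simp_all
    thus ?thesis by (simp add: fact_numeral)
  qed
  ultimately show ?thesis by linarith
qed

lemma one_minus_cos_ge:
  fixes th :: real assumes "\<bar>th\<bar> \<le> pi"
  shows "th^2/16 \<le> 1 - cos th"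
proof (cases "\<bar>th\<bar> \<le> 2")
  case True
  have "\<bar>th\<bar>^2 \<le> 2^2" using True by (intro power_mono) simp_all
  hence "th^2 \<le> 4" by simp
  have "th^4 = th^2 * th^2" by algebra
  also have "\<dots> \<le> 4 * th^2" using \<open>th^2 \<le> 4\<close> by (intro mult_right_mono) simp_all
  finally have "th^4 \<le> 4 * th^2" .
  with cos_quart[of th] zero_le_power2[of th] show ?thesis by linarith
next
  case False
  have "cos th = cos \<bar>th\<bar>" by simp
  also have "\<dots> \<le> cos (pi/2)" using False assms pi_less_4 
    by (subst cos_mono_le_eq) auto
  finally have "cos th \<le> 0" by simp
  moreover have "\<bar>th\<bar>^2 \<le> pi^2" using assms by (intro power_mono) simp_all
  moreover have "pi^2 < 4^2" using pi_less_4 pi_gt_zero by (intro power_strict_mono) simp_all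
  ultimately show ?thesis by simp
qed

lemma exp_neg_le_inv: "(u::real) \<ge> 0 \<Longrightarrow> exp (-u) \<le> 1/(1+u)"
proof -
  assume "u \<ge> 0"
  have "1 + u \<le> exp u" by (rule exp_ge_add_one_self)
  thus ?thesis using \<open>u \<ge> 0\<close> by (simp add: exp_minus field_simps)
qed

lemma exp_neg_le_inv2: "(u::real) \<ge> 0 \<Longrightarrow> (1+u) * exp (-u) \<le> 4/(1+u)"
proof -
  assume u: "u \<ge> 0"
  have "1 + u + u^2/2 \<le> exp u" by (rule exp_lower_Taylor_quadratic[OF u])
  moreover have "u*u \<ge> 0" using u by simp
  moreover have "(1+u)*(1+u) = 1 + 2*u + u*u" by algebra
  moreover have "u^2 = u*u" by (simp add: power2_eq_square)
  ultimately have "(1+u)*(1+u) \<le> 4 * exp u" using u by linarith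
  thus ?thesis using u by (simp add: exp_minus field_simps)
qed

lemma exp_minus_one_abs: "\<bar>exp (y::real) - 1\<bar> \<le> \<bar>y\<bar> * exp \<bar>y\<bar>"
proof (cases "y \<ge> 0")
  case True
  have "1 - y \<le> exp (-y)" using exp_ge_add_one_self[of "-y"] by simp
  hence "exp y * (1 - y) \<le> exp y * exp (-y)" by simp
  hence "exp y - y * exp y \<le> 1" by (simp add: exp_minus algebra_simps)
  thus ?thesis using True by simp
next
  case False
  have "1 + y \<le> exp y" by (rule exp_ge_add_one_self)
  moreover have "exp y \<le> 1" using False by simp
  moreover have "1 \<le> exp \<bar>y\<bar>" by simp
  moreover have "(-y) * 1 \<le> (-y) * exp (-y)" using False by (intro mult_left_mono) simp_all
  moreover have "\<bar>exp y - 1\<bar> = 1 - exp y" using \<open>exp y \<le> 1\<close> by simp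
  moreover have "\<bar>y\<bar> * exp \<bar>y\<bar> = -y * exp (-y)" using False by simp
  ultimately show ?thesis by linarith
qed

lemma cosh_minus_one_le0: "(u::real) \<ge> 0 \<Longrightarrow> cosh u - 1 \<le> u^2 * exp u / 2"
proof -
  assume u0: "u \<ge> 0"
  define w where "w = u/2"
  have w0: "w \<ge> 0" using u0 by (simp add: w_def)
  have e1: "exp u = exp w * exp w" unfolding w_def by (simp add: exp_add[symmetric])
  have e2: "exp (-u) = exp (-w) * exp (-w)" unfolding w_def by (simp add: exp_add[symmetric])
  have e3: "exp w * exp (-w) = 1" by (simp add: exp_minus)
  have ch: "cosh u - 1 = (exp w - exp (-w))^2 / 2"
    unfolding cosh_def power2_eq_square using e1 e2 e3 by (simp add: algebra_simps)
  have "1 - 2*w \<le> exp (-2*w)" using exp_ge_add_one_self[of "-2*w"] by simp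
  hence "exp w * (1 - exp (-2*w)) \<le> exp w * (2*w)" by simp
  moreover have "exp w * exp (-2*w) = exp (-w)" by (simp add: exp_add[symmetric])
  ultimately have d: "exp w - exp (-w) \<le> 2*w*exp w" by (simp add: algebra_simps)
  have d0: "0 \<le> exp w - exp (-w)" using w0 by simp
  have "(exp w - exp (-w))^2 \<le> (2*w*exp w)^2" using d d0 by (simp add: power_mono)
  also have "\<dots> = u^2 * exp u" unfolding w_def e1 by (simp add: power2_eq_square w_def)
  finally show ?thesis using ch by simp
qed

lemma cosh_minus_one_le: "cosh (u::real) - 1 \<le> u^2 * exp \<bar>u\<bar> / 2"
proof (cases "u \<ge> 0")
  case True thus ?thesis using cosh_minus_one_le0[of u] by simp
next
  case False thus ?thesis using cosh_minus_one_le0[of "-u"] by simp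
qed

lemma arctan_integral:
  fixes a :: real assumes a: "a > 0"
  shows "((\<lambda>th. 1/(1+a*th^2)) has_integral (2*arctan(sqrt a * pi)/sqrt a)) {-pi..pi}"
proof -
  have "((\<lambda>th. 1/(1+a*th^2)) has_integral (arctan(sqrt a * pi)/sqrt a - arctan(sqrt a * (-pi))/sqrt a)) {-pi..pi}"
  proof (rule fundamental_theorem_of_calculus)
    show "- pi \<le> pi" by simp
    fix x :: real
    have "((\<lambda>th. arctan(sqrt a * th)/sqrt a) has_real_derivative (1/(1+a*x^2))) (at x)"
    proof -
      have "1 + a*x^2 > 0" using a by (simp add: add_pos_nonneg)
      moreover have "sqrt a * sqrt a = a" using a by simp
      moreover have "a + a*(a*x^2) \<noteq> 0"
      proof -
        have "a*(a*x^2) \<ge> 0" using a by simp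
        thus ?thesis using a by linarith
      qed
      ultimately show ?thesis using a by (auto intro!: derivative_eq_intros simp: power_mult_distrib) (simp add: field_simps)
    qed
    thus "((\<lambda>th. arctan(sqrt a * th)/sqrt a) has_vector_derivative (1/(1+a*x^2))) (at x within {-pi..pi})"
      using has_real_derivative_iff_has_vector_derivative has_vector_derivative_at_within by blast
  qed
  thus ?thesis by (simp add: arctan_minus)
qed

lemma arctan_integral_le:
  fixes a :: real assumes a: "a > 0"
  shows "integral {-pi..pi} (\<lambda>th. 1/(1+a*th^2)) \<le> pi / sqrt a"
proof -
  have "integral {-pi..pi} (\<lambda>th. 1/(1+a*th^2)) = 2*arctan(sqrt a * pi)/sqrt a"
    using arctan_integral[OF a] by (rule integral_unique)
  also have "\<dots> \<le> pi / sqrt a" using arctan_ubound[of "sqrt a * pi"] a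
    by (simp add: divide_right_mono)
  finally show ?thesis .
qed

definition cc :: "real \<Rightarrow> real \<Rightarrow> complex" where
  "cc l th = (exp (Complex l th) + exp (- Complex l th)) / 2"

lemma norm_cc: "norm (cc l th) \<le> cosh l"
proof -
  have "norm (exp (Complex l th) + exp (- Complex l th)) \<le> norm (exp (Complex l th)) + norm (exp (- Complex l th))"
    by (rule norm_triangle_ineq)
  hence "norm (cc l th) \<le> (norm (exp (Complex l th)) + norm (exp (- Complex l th))) / 2"
    unfolding cc_def by (simp add: divide_right_mono)
  also have "\<dots> = cosh l" by (simp add: norm_exp_eq_Re cosh_def)
  finally show ?thesis .
qed

lemma Re_cc: "Re (cc l th) = cosh l * cos th"
  unfolding cc_def by (simp add: Re_exp cosh_def algebra_simps add_divide_distrib)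

lemma norm_exp_cc: "norm (exp (of_real t * (cc l th - 1))) = exp (t * (cosh l * cos th - 1))"
  by (simp add: norm_exp_eq_Re Re_cc)

lemma exp_int_integral:
  fixes m :: int
  shows "((\<lambda>th. exp (\<i> * of_real (of_int m * th))) has_integral (if m = 0 then of_real (2*pi) else 0)) {-pi..pi}"
proof (cases "m = 0")
  case True
  have "((\<lambda>th. 1::complex) has_integral of_real (2*pi)) {-pi..pi}"
    using has_integral_const_real[of "1::complex" "-pi" pi] by (simp add: scaleR_conv_of_real)
  thus ?thesis using True by simp
next
  case False
  define F where "F th = exp (\<i> * of_real (of_int m * th)) / (\<i> * of_int m)" for th
  have "((\<lambda>th. exp (\<i> * of_real (of_int m * th))) has_integral (F pi - F (-pi))) {-pi..pi}"
  proof (rule fundamental_theorem_of_calculus)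
    show "-pi \<le> pi" by simp
    fix x :: real
    define G where "G z = exp (\<i> * of_int m * z) / (\<i> * of_int m)" for z :: complex
    have "(G has_field_derivative exp (\<i> * of_int m * of_real x)) (at (of_real x))"
      unfolding G_def using False
      by (auto intro!: derivative_eq_intros)
    hence "((G o of_real) has_vector_derivative exp (\<i> * of_int m * of_real x)) (at x within {-pi..pi})"
      by (rule has_complex_derivative_imp_has_vector_derivative[OF has_field_derivative_at_within])
    moreover have "G o of_real = F" unfolding G_def F_def by (rule ext) (simp add: o_def mult.assoc)
    ultimately show "(F has_vector_derivative exp (\<i> * of_real (of_int m * x))) (at x within {-pi..pi})"
      by (simp add: mult.assoc)
  qed
  moreover have "F pi = F (-pi)"
  proof -
    have s0: "sin (of_int m * pi) = 0" using sin_npi_int[of m] by (simp only: mult.commute)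
    have "cis (of_int m * pi) = cis (of_int m * (-pi))"
      using s0 by (simp add: complex_eq_iff)
    hence "exp (\<i> * of_real (of_int m * pi)) = exp (\<i> * of_real (of_int m * (-pi)))"
      by (simp only: cis_conv_exp)
    thus ?thesis unfolding F_def by simp
  qed
  ultimately show ?thesis using False by simp
qed
lemma term_identity:
  fixes j k :: nat and x :: int and l th :: real
  assumes jk: "j \<le> k"
  shows "exp (Complex l th) ^ j * exp (- Complex l th) ^ (k - j) * exp (- (\<i> * of_real (of_int x * th)))
       = of_real (exp (l * of_int (int (2*j) - int k))) * exp (\<i> * of_real (of_int (int (2*j) - int k - x) * th))"
proof -
  have a: "exp (Complex l th) ^ j = exp (of_nat j * Complex l th)" by (rule exp_of_nat_mult[symmetric])
  have b: "exp (- Complex l th) ^ (k - j) = exp (of_nat (k - j) * (- Complex l th))" by (rule exp_of_nat_mult[symmetric])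
  have c: "of_real (exp (l * of_int (int (2*j) - int k))) = exp (of_real (l * of_int (int (2*j) - int k)) :: complex)"
    by (simp only: exp_of_real)
  have arg: "of_nat j * Complex l th + of_nat (k - j) * (- Complex l th) + (- (\<i> * of_real (of_int x * th)))
      = of_real (l * of_int (int (2*j) - int k)) + \<i> * of_real (of_int (int (2*j) - int k - x) * th)"
    using jk by (simp add: complex_eq_iff of_nat_diff algebra_simps)
  show ?thesis unfolding a b c
    by (simp only: exp_add[symmetric] arg)
qed

lemma cc_pow_expand:
  fixes k :: nat and x :: int
  shows "cc l th ^ k * exp (- (\<i> * of_real (of_int x * th))) =
    (\<Sum>j\<le>k. of_real (real (k choose j) / 2^k * exp (l * of_int (int (2*j) - int k)))
           * exp (\<i> * of_real (of_int (int (2*j) - int k - x) * th)))"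
proof -
  have "cc l th ^ k = (exp (Complex l th) + exp (- Complex l th)) ^ k / 2^k"
    unfolding cc_def by (simp add: power_divide)
  also have "(exp (Complex l th) + exp (- Complex l th)) ^ k =
      (\<Sum>j\<le>k. of_nat (k choose j) * exp (Complex l th) ^ j * exp (- Complex l th) ^ (k - j))"
    by (rule binomial_ring)
  finally have "cc l th ^ k * exp (- (\<i> * of_real (of_int x * th))) =
      (\<Sum>j\<le>k. of_nat (k choose j) / 2^k * (exp (Complex l th) ^ j * exp (- Complex l th) ^ (k - j)
          * exp (- (\<i> * of_real (of_int x * th)))))"
    by (auto simp: sum_distrib_left sum_distrib_right sum_divide_distrib mult_ac intro!: sum.cong)
  also have "\<dots> = (\<Sum>j\<le>k. of_real (real (k choose j) / 2^k * exp (l * of_int (int (2*j) - int k)))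
           * exp (\<i> * of_real (of_int (int (2*j) - int k - x) * th)))"
  proof (rule sum.cong[OF refl])
    fix j assume "j \<in> {..k}"
    hence jk: "j \<le> k" by simp
    show "of_nat (k choose j) / 2^k * (exp (Complex l th) ^ j * exp (- Complex l th) ^ (k - j)
          * exp (- (\<i> * of_real (of_int x * th)))) = of_real (real (k choose j) / 2^k * exp (l * of_int (int (2*j) - int k)))
           * exp (\<i> * of_real (of_int (int (2*j) - int k - x) * th))"
      unfolding term_identity[OF jk] by simp
  qed
  finally show ?thesis .
qed

lemma choose_sum_srw:
  fixes k :: nat and x :: int
  shows "(\<Sum>j\<le>k. if int (2*j) - int k - x = 0 then real (k choose j) else 0) = 2^k * srw_prob k x"
proof -
  define C where "C = (even (int k + x) \<and> \<bar>x\<bar> \<le> int k)"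
  define j0 where "j0 = nat ((int k + x) div 2)"
  have eqv: "(int (2*j) - int k - x = 0) \<longleftrightarrow> (C \<and> j = j0)" if "j \<le> k" for j
  proof
    assume h: "int (2*j) - int k - x = 0"
    hence h2: "int k + x = 2 * int j" by simp
    have "even (int k + x)" using h2 by simp
    moreover have "\<bar>x\<bar> \<le> int k" using h2 that by linarith
    moreover have "j = nat ((int k + x) div 2)" using h2 by simp
    ultimately show "C \<and> j = j0" unfolding C_def j0_def by simp
  next
    assume "C \<and> j = j0"
    hence e: "even (int k + x)" "\<bar>x\<bar> \<le> int k" "j = nat ((int k + x) div 2)" unfolding C_def j0_def by auto
    from e(1) obtain q where q: "int k + x = 2 * q" by (rule evenE)
    have "q \<ge> 0" using q e(2) by linarith
    hence "int j = q" using e(3) q by simp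
    thus "int (2*j) - int k - x = 0" using q by simp
  qed
  have "(\<Sum>j\<le>k. if int (2*j) - int k - x = 0 then real (k choose j) else 0)
      = (\<Sum>j\<le>k. if C \<and> j = j0 then real (k choose j) else 0)"
  proof (rule sum.cong[OF refl])
    fix j assume "j \<in> {..k}"
    hence jk: "j \<le> k" by simp
    show "(if int (2*j) - int k - x = 0 then real (k choose j) else 0) = (if C \<and> j = j0 then real (k choose j) else 0)"
      by (simp only: eqv[OF jk])
  qed
  also have "\<dots> = (if C then real (k choose j0) else 0)"
  proof (cases C)
    case True
    have "j0 \<le> k" using True unfolding C_def j0_def by (auto elim!: evenE)
    thus ?thesis using True by (simp add: sum.delta')
  qed simp
  also have "\<dots> = 2^k * srw_prob k x"
  proof (cases C)
    case True
    have "k choose j0 = k choose nat ((int k + \<bar>x\<bar>) div 2)"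
    proof (cases "x \<ge> 0")
      case True thus ?thesis unfolding j0_def by simp
    next
      case False
      have ev: "even (int k + x)" using \<open>C\<close> unfolding C_def by simp
      from ev obtain q where q: "int k + x = 2 * q" by (rule evenE)
      have q0: "q \<ge> 0" using q \<open>C\<close> unfolding C_def by linarith
      have "nat ((int k + \<bar>x\<bar>) div 2) = k - j0" "j0 \<le> k"
        using False q q0 \<open>C\<close> unfolding C_def j0_def by (auto simp: nat_diff_distrib)
      thus ?thesis by (simp add: binomial_symmetric[symmetric])
    qed
    thus ?thesis using True unfolding srw_prob_def C_def by simp
  next
    case False thus ?thesis unfolding srw_prob_def C_def by auto
  qed
  finally show ?thesis .
qed
lemma fin_integral:
  fixes k :: nat and x :: int
  shows "((\<lambda>th. cc l th ^ k * exp (- (\<i> * of_real (of_int x * th)))) has_integral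
          of_real (2*pi*exp (l * of_int x) * srw_prob k x)) {-pi..pi}"
proof -
  define c where "c j = real (k choose j) / 2^k * exp (l * of_int (int (2*j) - int k))" for j
  define d where "d j = int (2*j) - int k - x" for j
  have each: "((\<lambda>th. of_real (c j) * exp (\<i> * of_real (of_int (d j) * th))) has_integral
      (of_real (c j) * (if d j = 0 then of_real (2*pi) else 0))) {-pi..pi}" for j
    by (rule has_integral_mult_right) (rule exp_int_integral)
  have "((\<lambda>th. \<Sum>j\<le>k. of_real (c j) * exp (\<i> * of_real (of_int (d j) * th))) has_integral
      (\<Sum>j\<le>k. of_real (c j) * (if d j = 0 then of_real (2*pi) else 0))) {-pi..pi}"
    by (rule has_integral_sum[OF finite_atMost each])
  moreover have "(\<Sum>j\<le>k. of_real (c j) * (if d j = 0 then of_real (2*pi) else 0) :: complex)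
      = of_real (2*pi*exp (l * of_int x) * srw_prob k x)"
  proof -
    have "(\<Sum>j\<le>k. of_real (c j) * (if d j = 0 then of_real (2*pi) else 0) :: complex)
        = of_real (\<Sum>j\<le>k. 2*pi*exp (l * of_int x) / 2^k * (if d j = 0 then real (k choose j) else 0))"
      unfolding of_real_sum
    proof (rule sum.cong[OF refl])
      fix j assume "j \<in> {..k}"
      show "of_real (c j) * (if d j = 0 then of_real (2*pi) else 0) =
          (of_real (2*pi*exp (l * of_int x) / 2^k * (if d j = 0 then real (k choose j) else 0)) :: complex)"
      proof (cases "d j = 0")
        case True
        hence "int (2*j) - int k = x" unfolding d_def by simp
        thus ?thesis using True unfolding c_def by simp
      qed simp
    qed
    also have "(\<Sum>j\<le>k. 2*pi*exp (l * of_int x) / 2^k * (if d j = 0 then real (k choose j) else 0))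
        = 2*pi*exp (l * of_int x) / 2^k * (\<Sum>j\<le>k. if d j = 0 then real (k choose j) else 0)"
      by (simp add: sum_distrib_left)
    also have "(\<Sum>j\<le>k. if d j = 0 then real (k choose j) else 0) = 2^k * srw_prob k x"
      unfolding d_def by (rule choose_sum_srw)
    finally show ?thesis by simp
  qed
  ultimately have "((\<lambda>th. \<Sum>j\<le>k. of_real (c j) * exp (\<i> * of_real (of_int (d j) * th))) has_integral
      of_real (2*pi*exp (l * of_int x) * srw_prob k x)) {-pi..pi}" by simp
  moreover have "(\<lambda>th. \<Sum>j\<le>k. of_real (c j) * exp (\<i> * of_real (of_int (d j) * th))) =
      (\<lambda>th. cc l th ^ k * exp (- (\<i> * of_real (of_int x * th))))"
    unfolding cc_pow_expand c_def d_def by simp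
  ultimately show ?thesis by simp
qed

lemma srw_nonneg: "0 \<le> srw_prob k x"
  unfolding srw_prob_def by simp

lemma srw_le1: "srw_prob k x \<le> 1"
proof -
  have "real (k choose j) \<le> 2^k" for j using binomial_le_pow2[of k j]
    by (metis of_nat_le_iff of_nat_numeral of_nat_power)
  thus ?thesis unfolding srw_prob_def by simp
qed

lemma exp_sums_real: "(\<lambda>k. (t::real)^k / fact k) sums exp t"
proof -
  have "(\<lambda>n. t^n /\<^sub>R fact n) = (\<lambda>k. t^k / fact k)"
    by (rule ext) (simp add: divide_inverse mult.commute)
  thus ?thesis using exp_converges[of t] by simp
qed

lemma heat_sums:
  "(\<lambda>k. exp (-t) * t^k / fact k * srw_prob k x) sums heat_kernel t x" if t: "t \<ge> 0"
proof -
  have s1: "summable (\<lambda>k. exp (-t) * (t^k / fact k))"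
    using sums_summable[OF sums_mult[OF exp_sums_real[of t], of "exp (-t)"]] .
  have "summable (\<lambda>k. exp (-t) * t^k / fact k * srw_prob k x)"
  proof (rule summable_comparison_test[OF _ s1])
    show "\<exists>N. \<forall>n\<ge>N. norm (exp (-t) * t^n / fact n * srw_prob n x) \<le> exp (-t) * (t^n / fact n)"
    proof (intro exI allI impI)
      fix n
      have "0 \<le> exp (-t) * t^n / fact n" using t by simp
      hence "exp (-t) * t^n / fact n * srw_prob n x \<le> exp (-t) * t^n / fact n * 1"
        by (intro mult_left_mono srw_le1)
      thus "norm (exp (-t) * t^n / fact n * srw_prob n x) \<le> exp (-t) * (t^n / fact n)"
        using t srw_nonneg[of n x] by simp
    qed
  qed
  thus ?thesis unfolding heat_kernel_def by (rule summable_sums)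
qed
lemma exp_sums_cosh:
  fixes t l :: real
  shows "(\<lambda>k. exp (-t) * t^k / fact k * cosh l ^ k) sums (exp (-t) * exp (t * cosh l))"
proof -
  have "(\<lambda>k. exp (-t) * ((t * cosh l)^k / fact k)) sums (exp (-t) * exp (t * cosh l))"
    using sums_mult[OF exp_sums_real[of "t * cosh l"], of "exp (-t)"] by simp
  thus ?thesis by (simp add: power_mult_distrib mult_ac)
qed

lemma fourier_heat:
  fixes x :: int assumes t: "t \<ge> 0"
  shows "((\<lambda>th. exp (of_real t * (cc l th - 1)) * exp (- (\<i> * of_real (of_int x * th)))) has_integral
          of_real (2*pi*exp (l * of_int x) * heat_kernel t x)) {-pi..pi}"
proof -
  define a where "a k = exp (-t) * t^k / fact k" for k
  define E where "E th = exp (- (\<i> * of_real (of_int x * th)))" for th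
  define f where "f N th = (\<Sum>k<N. of_real (a k) * (cc l th ^ k * E th))" for N th
  define y where "y N = (\<Sum>k<N. of_real (a k) * of_real (2*pi*exp (l * of_int x) * srw_prob k x) :: complex)" for N
  have a0: "a k \<ge> 0" for k unfolding a_def using t by simp
  show ?thesis
  proof (rule has_integral_dominated_convergence[where f = f and y = y and h = "\<lambda>th. exp (-t) * exp (t * cosh l)"])
    show "(f N has_integral y N) {-pi..pi}" for N
      unfolding f_def y_def
    proof (rule has_integral_sum[OF finite_lessThan])
      fix k
      show "((\<lambda>th. of_real (a k) * (cc l th ^ k * E th)) has_integral
          (of_real (a k) * of_real (2*pi*exp (l * of_int x) * srw_prob k x))) {-pi..pi}"
        unfolding E_def by (rule has_integral_mult_right) (rule fin_integral)
    qed
    show "(\<lambda>th. exp (-t) * exp (t * cosh l)) integrable_on {-pi..pi}" by (rule integrable_const_ivl)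
    show "\<forall>th\<in>{-pi..pi}. norm (f N th) \<le> exp (-t) * exp (t * cosh l)" for N
    proof
      fix th :: real
      have "norm (f N th) \<le> (\<Sum>k<N. norm (of_real (a k) * (cc l th ^ k * E th)))"
        unfolding f_def by (rule norm_sum)
      also have "\<dots> \<le> (\<Sum>k<N. a k * cosh l ^ k)"
      proof (rule sum_mono)
        fix k
        have "norm (of_real (a k) * (cc l th ^ k * E th)) = a k * norm (cc l th) ^ k"
          unfolding E_def using a0[of k] by (simp add: norm_mult norm_power)
        also have "\<dots> \<le> a k * cosh l ^ k"
          using a0[of k] norm_cc[of l th] by (intro mult_left_mono power_mono) simp_all
        finally show "norm (of_real (a k) * (cc l th ^ k * E th)) \<le> a k * cosh l ^ k" .
      qed
      also have "\<dots> \<le> (\<Sum>k. a k * cosh l ^ k)"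
      proof (rule sum_le_suminf)
        show "summable (\<lambda>k. a k * cosh l ^ k)"
          unfolding a_def using exp_sums_cosh[of t l] by (rule sums_summable)
        show "finite {..<N}" by simp
        have ch0: "cosh l \<ge> 0" by (simp add: cosh_def add_nonneg_nonneg)
        show "0 \<le> a n * cosh l ^ n" if "n \<in> - {..<N}" for n using a0[of n] ch0 by simp
      qed
      also have "\<dots> = exp (-t) * exp (t * cosh l)"
        unfolding a_def using exp_sums_cosh[of t l] by (rule sums_unique[symmetric])
      finally show "norm (f N th) \<le> exp (-t) * exp (t * cosh l)" .
    qed
    show "\<forall>th\<in>{-pi..pi}. (\<lambda>N. f N th) \<longlonglongrightarrow> exp (of_real t * (cc l th - 1)) * exp (- (\<i> * of_real (of_int x * th)))"
    proof
      fix th :: real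
      define z where "z = of_real t * cc l th"
      have "(\<lambda>n. (of_real (exp (-t)) * E th) * (z^n /\<^sub>R fact n)) sums ((of_real (exp (-t)) * E th) * exp z)"
        by (rule sums_mult[OF exp_converges])
      moreover have "(\<lambda>n. (of_real (exp (-t)) * E th) * (z^n /\<^sub>R fact n)) = (\<lambda>k. of_real (a k) * (cc l th ^ k * E th))"
        by (rule ext) (simp add: a_def z_def power_mult_distrib scaleR_conv_of_real field_simps)
      moreover have "(of_real (exp (-t)) * E th) * exp z = exp (of_real t * (cc l th - 1)) * E th"
        unfolding z_def by (simp add: right_diff_distrib exp_diff exp_of_real[symmetric] exp_minus field_simps)
      ultimately have "(\<lambda>k. of_real (a k) * (cc l th ^ k * E th)) sums (exp (of_real t * (cc l th - 1)) * E th)"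
        by simp
      thus "(\<lambda>N. f N th) \<longlonglongrightarrow> exp (of_real t * (cc l th - 1)) * exp (- (\<i> * of_real (of_int x * th)))"
        unfolding f_def sums_def E_def .
    qed
    show "y \<longlonglongrightarrow> of_real (2*pi*exp (l * of_int x) * heat_kernel t x)"
    proof -
      have "(\<lambda>k. 2*pi*exp (l * of_int x) * (a k * srw_prob k x)) sums (2*pi*exp (l * of_int x) * heat_kernel t x)"
        by (rule sums_mult) (use heat_sums[OF t, of x] in \<open>simp add: a_def\<close>)
      hence S: "(\<lambda>k. of_real (2*pi*exp (l * of_int x) * (a k * srw_prob k x)) :: complex) sums of_real (2*pi*exp (l * of_int x) * heat_kernel t x)"
        by (simp only: sums_of_real_iff)
      have eq: "(\<lambda>k. of_real (2*pi*exp (l * of_int x) * (a k * srw_prob k x)) :: complex)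
          = (\<lambda>k. of_real (a k) * of_real (2*pi*exp (l * of_int x) * srw_prob k x))"
        by (rule ext) (simp add: mult_ac)
      from S[unfolded eq] show ?thesis unfolding y_def sums_def .
    qed
  qed
qed

definition mm :: "real \<Rightarrow> real" where "mm t = (if t \<le> 1 then 1 else 1 / sqrt t)"

lemma mm_pos: "mm t > 0" unfolding mm_def by auto
lemma mm_le1: "mm t \<le> 1" unfolding mm_def by auto
lemma mm_sq_t: "t \<ge> 0 \<Longrightarrow> t * mm t ^ 2 \<le> 1"
  unfolding mm_def by (auto simp: power_divide)

lemma cos_ge_quad: "cos (x::real) \<ge> 1 - x^2/2"
proof -
  obtain t where "cos x = (\<Sum>m<2. cos_coeff m * x ^ m) + (cos(t + 1/2 * real 2 * pi) / fact 2) * x ^ 2"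
    using Maclaurin_cos_expansion[of x 2] by blast
  moreover have "(\<Sum>m<2. cos_coeff m * x ^ m) = 1"
    by (simp add: numeral_eq_Suc cos_coeff_def lessThan_Suc)
  moreover have "cos(t + 1/2 * real 2 * pi) * x^2 \<ge> (-1) * x^2" by (rule mult_right_mono) simp_all
  ultimately show ?thesis by (simp add: fact_numeral)
qed

lemma norm_cis_minus_one: "norm (exp (\<i> * of_real u) - 1) \<le> \<bar>u\<bar>"
proof -
  have "exp (\<i> * of_real u) - 1 = Complex (cos u - 1) (sin u)"
    unfolding cis_conv_exp[symmetric] by (simp add: complex_eq_iff)
  hence "norm (exp (\<i> * of_real u) - 1) = sqrt ((cos u - 1)^2 + (sin u)^2)"
    by (simp add: cmod_def)
  also have "(cos u - 1)^2 + (sin u)^2 = 2 - 2 * cos u"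
    using sin_cos_squared_add[of u] by (simp add: power2_eq_square algebra_simps)
  also have "sqrt (2 - 2 * cos u) \<le> sqrt (u^2)" using cos_ge_quad[of u] by (intro real_sqrt_le_mono) simp
  also have "sqrt (u^2) = \<bar>u\<bar>" by (rule real_sqrt_abs)
  finally show ?thesis .
qed

lemma g_bound_large:
  fixes t th :: real assumes t: "t > 1" and th: "\<bar>th\<bar> \<le> pi"
  shows "exp (-t*(1 - cos th)) \<le> 1/(1 + (t/16)*th^2)"
proof -
  have "t * (th^2/16) \<le> t * (1 - cos th)" using one_minus_cos_ge[OF th] t by (intro mult_left_mono) simp_all
  hence "exp (-t*(1 - cos th)) \<le> exp (-((t/16)*th^2))" by simp
  also have "\<dots> \<le> 1/(1 + (t/16)*th^2)" using t by (intro exp_neg_le_inv) simp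
  finally show ?thesis .
qed

lemma g1_bound_large:
  fixes t th :: real assumes t: "t > 1" and th: "\<bar>th\<bar> \<le> pi"
  shows "\<bar>th\<bar> * exp (-t*(1 - cos th)) \<le> (2 / sqrt (t/16)) * (1/(1 + (t/16)*th^2))"
proof -
  define a where "a = t/16"
  define u where "u = a * th^2"
  have a: "a > 0" using t by (simp add: a_def)
  have u0: "u \<ge> 0" using a by (simp add: u_def)
  have sa: "sqrt a * sqrt a = a" using a by simp
  have "0 \<le> (sqrt a * \<bar>th\<bar> - 1)^2" by simp
  hence "2 * sqrt a * \<bar>th\<bar> \<le> 1 + u"
    unfolding u_def using sa by (simp add: power2_eq_square algebra_simps)
  hence th1: "\<bar>th\<bar> \<le> (1 + u) / (2 * sqrt a)" using a by (simp add: field_simps)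
  have "exp (-t*(1 - cos th)) \<le> exp (-u)"
  proof -
    have "t * (th^2/16) \<le> t * (1 - cos th)" using one_minus_cos_ge[OF th] t by (intro mult_left_mono) simp_all
    thus ?thesis unfolding u_def a_def by simp
  qed
  hence "\<bar>th\<bar> * exp (-t*(1 - cos th)) \<le> ((1 + u) / (2 * sqrt a)) * exp (-u)"
    using th1 by (intro mult_mono) simp_all
  also have "\<dots> = ((1 + u) * exp (-u)) / (2 * sqrt a)" by simp
  also have "\<dots> \<le> (4/(1+u)) / (2 * sqrt a)"
    using exp_neg_le_inv2[OF u0] a by (intro divide_right_mono) simp_all
  also have "\<dots> = (2 / sqrt a) * (1/(1 + u))"
  proof -
    have "1 + u > 0" using u0 by simp
    thus ?thesis using a by (simp add: divide_simps)
  qed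
  finally show ?thesis unfolding u_def a_def .
qed

lemma cont_g: "continuous_on S (\<lambda>th::real. exp (-t*(1 - cos th)))"
  by (intro continuous_intros)

lemma cont_g1: "continuous_on S (\<lambda>th::real. \<bar>th\<bar> * exp (-t*(1 - cos th)))"
  by (intro continuous_intros)

lemma cont_q: "a \<ge> 0 \<Longrightarrow> continuous_on S (\<lambda>th::real. 1/(1 + a*th^2))"
proof -
  assume a: "a \<ge> 0"
  have "1 + a*th^2 \<noteq> 0" for th
  proof -
    have "a*th^2 \<ge> 0" using a by simp
    thus ?thesis by linarith
  qed
  thus ?thesis by (intro continuous_intros) auto
qed

lemma IB0:
  fixes t :: real assumes t: "t \<ge> 0"
  shows "integral {-pi..pi} (\<lambda>th. exp (-t*(1 - cos th))) \<le> 4*pi*mm t"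
proof (cases "t \<le> 1")
  case True
  have "integral {-pi..pi} (\<lambda>th. exp (-t*(1 - cos th))) \<le> integral {-pi..pi} (\<lambda>th. 1::real)"
    using t by (intro integral_le integrable_continuous_interval cont_g) (auto simp: mult_nonneg_nonneg)
  also have "\<dots> = 2*pi" by simp
  finally have I: "integral {-pi..pi} (\<lambda>th. exp (-t*(1 - cos th))) \<le> 2*pi" .
  have "4*pi*mm t = 4*pi" using True by (simp add: mm_def)
  thus ?thesis using I pi_gt_zero by linarith
next
  case False
  hence t1: "t > 1" by simp
  have "integral {-pi..pi} (\<lambda>th. exp (-t*(1 - cos th))) \<le> integral {-pi..pi} (\<lambda>th. 1/(1 + (t/16)*th^2))"
    using t1 by (intro integral_le integrable_continuous_interval cont_g cont_q g_bound_large) auto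
  also have "\<dots> \<le> pi / sqrt (t/16)" using t1 by (intro arctan_integral_le) simp
  also have "\<dots> = 4*pi*mm t" using t1 unfolding mm_def by (simp add: real_sqrt_divide)
  finally show ?thesis .
qed

lemma IB1:
  fixes t :: real assumes t: "t \<ge> 0"
  shows "integral {-pi..pi} (\<lambda>th. \<bar>th\<bar> * exp (-t*(1 - cos th))) \<le> 32*pi*mm t^2"
proof (cases "t \<le> 1")
  case True
  have "integral {-pi..pi} (\<lambda>th. \<bar>th\<bar> * exp (-t*(1 - cos th))) \<le> integral {-pi..pi} (\<lambda>th. pi)"
  proof (intro integral_le integrable_continuous_interval cont_g1 continuous_intros)
    fix th :: real assume "th \<in> {-pi..pi}"
    hence "\<bar>th\<bar> \<le> pi" by auto
    moreover have "exp (-t*(1 - cos th)) \<le> 1" using t by (simp add: mult_nonneg_nonneg)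
    ultimately have "\<bar>th\<bar> * exp (-t*(1 - cos th)) \<le> pi * 1" by (intro mult_mono) simp_all
    thus "\<bar>th\<bar> * exp (-t*(1 - cos th)) \<le> pi" by simp
  qed
  also have "\<dots> = 2*pi*pi" by simp
  also have "\<dots> \<le> 32*pi*mm t^2"
  proof -
    have "mm t = 1" using True by (simp add: mm_def)
    moreover have "2*pi*pi \<le> 2*pi*4" using pi_less_4 pi_gt_zero by (intro mult_left_mono) simp_all
    ultimately show ?thesis using pi_gt_zero by simp
  qed
  finally show ?thesis .
next
  case False
  hence t1: "t > 1" by simp
  have "integral {-pi..pi} (\<lambda>th. \<bar>th\<bar> * exp (-t*(1 - cos th)))
      \<le> integral {-pi..pi} (\<lambda>th. (2 / sqrt (t/16)) * (1/(1 + (t/16)*th^2)))"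
    using t1 by (intro integral_le integrable_continuous_interval cont_g1 continuous_on_mult continuous_on_const cont_q g1_bound_large)
      auto
  also have "\<dots> = (2 / sqrt (t/16)) * integral {-pi..pi} (\<lambda>th. 1/(1 + (t/16)*th^2))"
    by (rule Henstock_Kurzweil_Integration.integral_mult_right)
  also have "\<dots> \<le> (2 / sqrt (t/16)) * (pi / sqrt (t/16))"
    using t1 by (intro mult_left_mono arctan_integral_le) auto
  also have "\<dots> = 32*pi*mm t^2" using t1 unfolding mm_def by (simp add: real_sqrt_divide power_divide)
  finally show ?thesis .
qed
lemma cosh_ge1: "cosh (l::real) \<ge> 1"
proof -
  have a: "1 + l \<le> exp l" by (rule exp_ge_add_one_self)
  have b: "1 + (-l) \<le> exp (-l)" by (rule exp_ge_add_one_self)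
  have "exp l + exp (-l) \<ge> 2" using a b by linarith
  thus ?thesis by (simp add: cosh_def)
qed

lemma normF:
  fixes t :: real assumes t: "t \<ge> 0"
  shows "norm (exp (of_real t * (cc l th - 1))) \<le> exp (t*(cosh l - 1)) * exp (-t*(1 - cos th))"
proof -
  have c1: "cosh l \<ge> 1" by (rule cosh_ge1)
  have "(cosh l - 1) * (cos th - 1) \<le> 0" using c1 by (intro mult_nonneg_nonpos) simp_all
  hence "cosh l * cos th - 1 \<le> (cosh l - 1) + (- (1 - cos th))" by (simp add: algebra_simps)
  hence "t * (cosh l * cos th - 1) \<le> t * ((cosh l - 1) + (- (1 - cos th)))" using t by (intro mult_left_mono)
  hence "exp (t * (cosh l * cos th - 1)) \<le> exp (t*(cosh l - 1) + (-t*(1 - cos th)))" by (simp add: algebra_simps)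
  thus ?thesis unfolding norm_exp_cc exp_add .
qed

lemma B0:
  fixes t :: real and x :: int assumes t: "t \<ge> 0"
  shows "exp (l * of_int x) * \<bar>heat_kernel t x\<bar> \<le> exp (t*(cosh l - 1)) * (2 * mm t)"
proof -
  define E where "E = exp (t*(cosh l - 1))"
  have E0: "E \<ge> 0" by (simp add: E_def)
  let ?f = "\<lambda>th. exp (of_real t * (cc l th - 1)) * exp (- (\<i> * of_real (of_int x * th)))"
  have I: "(?f has_integral of_real (2*pi*exp (l * of_int x) * heat_kernel t x)) {-pi..pi}"
    by (rule fourier_heat[OF t])
  have "norm (integral {-pi..pi} ?f) \<le> integral {-pi..pi} (\<lambda>th. E * exp (-t*(1 - cos th)))"
  proof (rule integral_norm_bound_integral)
    show "?f integrable_on {-pi..pi}" using I by blast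
    show "(\<lambda>th. E * exp (-t*(1 - cos th))) integrable_on {-pi..pi}"
      by (intro integrable_continuous_interval continuous_intros)
    fix th :: real
    have "norm (?f th) = norm (exp (of_real t * (cc l th - 1)))" by (simp add: norm_mult)
    also have "\<dots> \<le> E * exp (-t*(1 - cos th))" unfolding E_def by (rule normF[OF t])
    finally show "norm (?f th) \<le> E * exp (-t*(1 - cos th))" .
  qed
  also have "\<dots> = E * integral {-pi..pi} (\<lambda>th. exp (-t*(1 - cos th)))"
    by (rule Henstock_Kurzweil_Integration.integral_mult_right)
  also have "\<dots> \<le> E * (4*pi*mm t)" using E0 IB0[OF t] by (rule mult_left_mono[rotated])
  finally have X: "norm (integral {-pi..pi} ?f) \<le> E * (4*pi*mm t)" .
  have "norm (integral {-pi..pi} ?f) = 2*pi*(exp (l * of_int x) * \<bar>heat_kernel t x\<bar>)"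
    unfolding integral_unique[OF I] norm_of_real using pi_gt_zero by (simp add: abs_mult)
  with X have "2*pi*(exp (l * of_int x) * \<bar>heat_kernel t x\<bar>) \<le> 2*pi*(E * (2 * mm t))"
    by (simp add: mult_ac)
  thus ?thesis unfolding E_def using pi_gt_zero by (simp add: mult_ac)
qed

lemma B1:
  fixes t :: real and x n :: int assumes t: "t \<ge> 0"
  shows "exp (l * of_int x) * \<bar>heat_kernel t (x + n) - heat_kernel t x\<bar>
     \<le> exp (t*(cosh l - 1)) * (\<bar>exp (-l * of_int n) - 1\<bar> * (2 * mm t) + \<bar>of_int n\<bar> * (16 * mm t^2))"
proof -
  define E where "E = exp (t*(cosh l - 1))"
  have E0: "E \<ge> 0" by (simp add: E_def)
  define c where "c = exp (-l * of_int n)"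
  define F where "F th = exp (of_real t * (cc l th - 1))" for th
  define e where "e y th = exp (- (\<i> * of_real (of_int y * th)))" for y :: int and th :: real
  define A where "A = \<bar>c - 1\<bar>"
  define B where "B = \<bar>(of_int n :: real)\<bar>"
  have A0: "A \<ge> 0" and B0: "B \<ge> 0" unfolding A_def B_def by simp_all
  let ?f = "\<lambda>th. of_real c * (F th * e (x + n) th) - F th * e x th"
  have I1: "((\<lambda>th. F th * e (x + n) th) has_integral of_real (2*pi*exp (l * of_int (x+n)) * heat_kernel t (x+n))) {-pi..pi}"
    unfolding F_def e_def by (rule fourier_heat[OF t])
  have I2: "((\<lambda>th. F th * e x th) has_integral of_real (2*pi*exp (l * of_int x) * heat_kernel t x)) {-pi..pi}"
    unfolding F_def e_def by (rule fourier_heat[OF t])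
  have "(?f has_integral (of_real c * of_real (2*pi*exp (l * of_int (x+n)) * heat_kernel t (x+n))
      - of_real (2*pi*exp (l * of_int x) * heat_kernel t x))) {-pi..pi}"
    by (intro has_integral_diff has_integral_mult_right I1 I2)
  moreover have "of_real c * of_real (2*pi*exp (l * of_int (x+n)) * heat_kernel t (x+n))
      - of_real (2*pi*exp (l * of_int x) * heat_kernel t x)
      = (of_real (2*pi*exp (l * of_int x) * (heat_kernel t (x+n) - heat_kernel t x)) :: complex)"
  proof -
    have "c * exp (l * of_int (x+n)) = exp (l * of_int x)"
      unfolding c_def by (simp add: exp_add[symmetric] algebra_simps)
    hence "c * (2*pi*exp (l * of_int (x+n)) * heat_kernel t (x+n)) = 2*pi*exp (l * of_int x) * heat_kernel t (x+n)"
      by (metis mult.assoc mult.left_commute)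
    hence "of_real c * of_real (2*pi*exp (l * of_int (x+n)) * heat_kernel t (x+n)) =
       (of_real (2*pi*exp (l * of_int x) * heat_kernel t (x+n)) :: complex)"
      by (metis of_real_mult)
    thus ?thesis by (simp add: algebra_simps)
  qed
  ultimately have I: "(?f has_integral of_real (2*pi*exp (l * of_int x) * (heat_kernel t (x+n) - heat_kernel t x))) {-pi..pi}"
    by simp
  define h where "h th = E * (A * exp (-t*(1 - cos th)) + B * (\<bar>th\<bar> * exp (-t*(1 - cos th))))" for th
  have hint: "h integrable_on {-pi..pi}" unfolding h_def
    by (intro integrable_continuous_interval continuous_intros)
  have "norm (integral {-pi..pi} ?f) \<le> integral {-pi..pi} h"
  proof (rule integral_norm_bound_integral)
    show "?f integrable_on {-pi..pi}" using I by blast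
    show "h integrable_on {-pi..pi}" by (rule hint)
    fix th :: real
    define w where "w = exp (- (\<i> * of_real (of_int n * th)))"
    have ew: "e (x + n) th = e x th * w" unfolding e_def w_def
      by (simp add: exp_add[symmetric] algebra_simps)
    have ne: "norm (e x th) = 1" unfolding e_def by (simp add: norm_exp_eq_Re)
    have nw: "norm w = 1" unfolding w_def by (simp add: norm_exp_eq_Re)
    have "?f th = F th * e x th * (of_real c * w - 1)" unfolding ew by (simp add: algebra_simps)
    hence "norm (?f th) = norm (F th) * norm (of_real c * w - 1)" by (simp add: norm_mult ne)
    also have "norm (of_real c * w - 1) \<le> A + B * \<bar>th\<bar>"
    proof -
      have "of_real c * w - 1 = of_real (c - 1) * w + (w - 1)" by (simp add: algebra_simps)
      hence "norm (of_real c * w - 1) \<le> norm (of_real (c - 1) * w) + norm (w - 1)"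
        by (metis norm_triangle_ineq)
      also have "norm (of_real (c - 1) * w) = A" unfolding A_def by (simp only: norm_mult nw norm_of_real) simp
      also have "norm (w - 1) \<le> \<bar>- (of_int n * th)\<bar>"
        unfolding w_def using norm_cis_minus_one[of "- (of_int n * th)"] by simp
      also have "\<bar>- (of_int n * th)\<bar> = B * \<bar>th\<bar>" unfolding B_def by (simp add: abs_mult)
      finally show ?thesis by simp
    qed
    hence "norm (F th) * norm (of_real c * w - 1) \<le> (E * exp (-t*(1 - cos th))) * (A + B * \<bar>th\<bar>)"
      using normF[OF t, of l th] A0 B0 unfolding F_def E_def
      by (intro mult_mono) simp_all
    also have "\<dots> = h th" unfolding h_def by (simp add: algebra_simps)
    finally show "norm (?f th) \<le> h th" .
  qed
  also have "integral {-pi..pi} h = E * (A * integral {-pi..pi} (\<lambda>th. exp (-t*(1 - cos th)))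
      + B * integral {-pi..pi} (\<lambda>th. \<bar>th\<bar> * exp (-t*(1 - cos th))))"
  proof -
    have i1: "(\<lambda>th. exp (-t*(1 - cos th))) integrable_on {-pi..pi}"
      by (intro integrable_continuous_interval cont_g)
    have i2: "(\<lambda>th. \<bar>th\<bar> * exp (-t*(1 - cos th))) integrable_on {-pi..pi}"
      by (intro integrable_continuous_interval cont_g1)
    have "((\<lambda>th. exp (-t*(1 - cos th))) has_integral integral {-pi..pi} (\<lambda>th. exp (-t*(1 - cos th)))) {-pi..pi}"
      using i1 by (rule integrable_integral)
    moreover have "((\<lambda>th. \<bar>th\<bar> * exp (-t*(1 - cos th))) has_integral integral {-pi..pi} (\<lambda>th. \<bar>th\<bar> * exp (-t*(1 - cos th)))) {-pi..pi}"
      using i2 by (rule integrable_integral)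
    ultimately have "(h has_integral E * (A * integral {-pi..pi} (\<lambda>th. exp (-t*(1 - cos th)))
      + B * integral {-pi..pi} (\<lambda>th. \<bar>th\<bar> * exp (-t*(1 - cos th))))) {-pi..pi}"
      unfolding h_def by (intro has_integral_mult_right has_integral_add)
    thus ?thesis by (rule integral_unique)
  qed
  also have "\<dots> \<le> E * (A * (4*pi*mm t) + B * (32*pi*mm t^2))"
    using E0 A0 B0 IB0[OF t] IB1[OF t] by (intro mult_left_mono add_mono) simp_all
  finally have X: "norm (integral {-pi..pi} ?f) \<le> E * (A * (4*pi*mm t) + B * (32*pi*mm t^2))" .
  have "norm (integral {-pi..pi} ?f) = 2*pi*(exp (l * of_int x) * \<bar>heat_kernel t (x+n) - heat_kernel t x\<bar>)"
    unfolding integral_unique[OF I] norm_of_real using pi_gt_zero by (simp add: abs_mult)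
  with X have "2*pi*(exp (l * of_int x) * \<bar>heat_kernel t (x+n) - heat_kernel t x\<bar>) \<le> 2*pi*(E * (A * (2*mm t) + B * (16*mm t^2)))"
    by (simp add: abs_mult algebra_simps)
  hence "exp (l * of_int x) * \<bar>heat_kernel t (x+n) - heat_kernel t x\<bar> \<le> E * (A * (2*mm t) + B * (16*mm t^2))"
    using pi_gt_zero by simp
  thus ?thesis unfolding E_def A_def B_def c_def by simp
qed

definition Emax :: "real \<Rightarrow> real" where "Emax L = exp (L^2 * exp L / 2)"
definition KK :: "real \<Rightarrow> real" where "KK L = 2 * L * exp L + 16"

lemma Emax_pos: "Emax L > 0" unfolding Emax_def by simp
lemma KK_ge: "L \<ge> 0 \<Longrightarrow> KK L \<ge> 16" unfolding KK_def by simp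

lemma E_bound:
  fixes t l L :: real
  assumes t: "t \<ge> 0" and L: "L \<ge> 0" and l: "\<bar>l\<bar> \<le> L * mm t"
  shows "exp (t*(cosh l - 1)) \<le> Emax L"
proof -
  have m0: "mm t > 0" "mm t \<le> 1" by (rule mm_pos, rule mm_le1)
  have la: "\<bar>l\<bar> \<le> L" using l m0 L by (meson order_trans mult_left_le)
  have "l^2 = \<bar>l\<bar>^2" by simp
  also have "\<dots> \<le> (L * mm t)^2" using l by (intro power_mono) simp_all
  finally have l2: "l^2 \<le> L^2 * mm t^2" by (simp add: power_mult_distrib)
  have "t*(cosh l - 1) \<le> t * (l^2 * exp \<bar>l\<bar> / 2)"
    using t cosh_minus_one_le[of l] by (intro mult_left_mono)
  also have "\<dots> \<le> t * ((L^2 * mm t^2) * exp L / 2)"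
    using t l2 la by (intro mult_left_mono divide_right_mono mult_mono) simp_all
  also have "\<dots> = (t * mm t^2) * (L^2 * exp L / 2)" by simp
  also have "\<dots> \<le> 1 * (L^2 * exp L / 2)" using mm_sq_t[OF t] by (intro mult_right_mono) simp_all
  finally show ?thesis unfolding Emax_def by simp
qed

lemma P_bound:
  fixes t l L :: real and s :: int
  assumes t: "t \<ge> 0" and L: "L \<ge> 0" and l: "\<bar>l\<bar> \<le> L * mm t"
  shows "\<bar>heat_kernel t s\<bar> \<le> Emax L * (2 * mm t) * exp (-l * of_int s)"
proof -
  have "exp (l * of_int s) * \<bar>heat_kernel t s\<bar> \<le> exp (t*(cosh l - 1)) * (2 * mm t)" by (rule B0[OF t])
  also have "\<dots> \<le> Emax L * (2 * mm t)" using E_bound[OF t L l] mm_pos[of t] by (intro mult_right_mono) simp_all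
  finally have "exp (l * of_int s) * \<bar>heat_kernel t s\<bar> \<le> Emax L * (2 * mm t)" .
  hence I: "exp (-l * of_int s) * (exp (l * of_int s) * \<bar>heat_kernel t s\<bar>) \<le> exp (-l * of_int s) * (Emax L * (2 * mm t))"
    by (intro mult_left_mono) simp_all
  have e1: "exp (-l * of_int s) * exp (l * of_int s) = 1" by (simp add: exp_add[symmetric])
  have eq: "exp (-l * of_int s) * (exp (l * of_int s) * \<bar>heat_kernel t s\<bar>) = \<bar>heat_kernel t s\<bar>"
    by (metis e1 mult.assoc mult_1)
  have eq2: "exp (-l * of_int s) * (Emax L * (2 * mm t)) = Emax L * (2 * mm t) * exp (-l * of_int s)" by (simp add: mult_ac)
  show ?thesis using I eq eq2 by linarith
qed

lemma Q_bound:
  fixes t l L :: real and s n :: int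
  assumes t: "t \<ge> 0" and L: "L \<ge> 0" and l: "\<bar>l\<bar> \<le> L * mm t" and n: "\<bar>of_int n\<bar> * mm t \<le> 1"
  shows "\<bar>heat_kernel t (s + n) - heat_kernel t s\<bar> \<le> Emax L * (KK L * mm t^2 * \<bar>of_int n\<bar>) * exp (-l * of_int s)"
proof -
  define m where "m = mm t"
  define N where "N = \<bar>(of_int n :: real)\<bar>"
  have m0: "m > 0" "m \<le> 1" unfolding m_def by (rule mm_pos, rule mm_le1)
  have N0: "N \<ge> 0" unfolding N_def by simp
  have ln: "\<bar>-l * of_int n\<bar> \<le> L * m * N" using l N0 unfolding m_def N_def by (simp add: abs_mult mult_right_mono)
  have "L * (m * N) \<le> L * 1" using n L unfolding m_def N_def by (intro mult_left_mono) (simp_all add: mult.commute)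
  hence lnL: "L * m * N \<le> L" by (simp add: mult.assoc)
  have "\<bar>exp (-l * of_int n) - 1\<bar> \<le> \<bar>-l * of_int n\<bar> * exp \<bar>-l * of_int n\<bar>" by (rule exp_minus_one_abs)
  also have "\<dots> \<le> (L * m * N) * exp L" using ln lnL by (intro mult_mono) simp_all
  finally have ea: "\<bar>exp (-l * of_int n) - 1\<bar> \<le> (L * m * N) * exp L" .
  have br: "\<bar>exp (-l * of_int n) - 1\<bar> * (2 * m) + N * (16 * m^2) \<le> KK L * m^2 * N"
  proof -
    have "\<bar>exp (-l * of_int n) - 1\<bar> * (2 * m) \<le> ((L * m * N) * exp L) * (2 * m)"
      using ea m0 by (intro mult_right_mono) simp_all
    also have "\<dots> = 2 * L * exp L * m^2 * N" by (simp add: power2_eq_square)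
    finally show ?thesis unfolding KK_def by (simp add: algebra_simps)
  qed
  have "exp (l * of_int s) * \<bar>heat_kernel t (s + n) - heat_kernel t s\<bar>
      \<le> exp (t*(cosh l - 1)) * (\<bar>exp (-l * of_int n) - 1\<bar> * (2 * mm t) + \<bar>of_int n\<bar> * (16 * mm t^2))"
    by (rule B1[OF t])
  also have "\<dots> \<le> Emax L * (KK L * mm t^2 * \<bar>of_int n\<bar>)"
    using E_bound[OF t L l] br Emax_pos[of L] mm_pos[of t] unfolding m_def N_def
    by (intro mult_mono) (simp_all add: KK_def add_nonneg_nonneg mult_nonneg_nonneg less_imp_le)
  finally have X: "exp (l * of_int s) * \<bar>heat_kernel t (s + n) - heat_kernel t s\<bar> \<le> Emax L * (KK L * mm t^2 * \<bar>of_int n\<bar>)" .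
  hence I: "exp (-l * of_int s) * (exp (l * of_int s) * \<bar>heat_kernel t (s + n) - heat_kernel t s\<bar>) \<le> exp (-l * of_int s) * (Emax L * (KK L * mm t^2 * \<bar>of_int n\<bar>))"
    by (intro mult_left_mono) simp_all
  have e1: "exp (-l * of_int s) * exp (l * of_int s) = 1" by (simp add: exp_add[symmetric])
  have eq: "exp (-l * of_int s) * (exp (l * of_int s) * \<bar>heat_kernel t (s + n) - heat_kernel t s\<bar>) = \<bar>heat_kernel t (s + n) - heat_kernel t s\<bar>"
    by (metis e1 mult.assoc mult_1)
  have eq2: "exp (-l * of_int s) * (Emax L * (KK L * mm t^2 * \<bar>of_int n\<bar>)) = Emax L * (KK L * mm t^2 * \<bar>of_int n\<bar>) * exp (-l * of_int s)" by (simp add: mult_ac)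
  show ?thesis using I eq eq2 by linarith
qed

lemma geom_summable:
  fixes f :: "nat \<Rightarrow> real"
  assumes "\<And>j. \<bar>f j\<bar> \<le> B * q^j" "0 \<le> q" "q < 1"
  shows "summable f"
proof (rule summable_comparison_test[of _ "\<lambda>j. B * q^j"])
  show "\<exists>N. \<forall>n\<ge>N. norm (f n) \<le> B * q^n" using assms(1) by auto
  show "summable (\<lambda>j. B * q^j)" using assms(2,3) by (intro summable_mult summable_geometric) simp
qed

lemma geom_bound:
  fixes f :: "nat \<Rightarrow> real"
  assumes f: "\<And>j. \<bar>f j\<bar> \<le> B * q^j" and q: "0 \<le> q" "q < 1"
  shows "\<bar>suminf f\<bar> \<le> B / (1 - q)"
proof -
  have sf: "summable f" by (rule geom_summable[OF f q])
  have sg: "(\<lambda>j. B * q^j) sums (B * (1 / (1 - q)))" using q by (intro sums_mult geometric_sums) simp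
  have sa: "summable (\<lambda>j. \<bar>f j\<bar>)"
    by (rule summable_comparison_test[OF _ sums_summable[OF sg]]) (use f in auto)
  have "\<bar>suminf f\<bar> \<le> (\<Sum>j. \<bar>f j\<bar>)" using summable_rabs[OF sa] by simp
  also have "\<dots> \<le> (\<Sum>j. B * q^j)" using sa sums_summable[OF sg] f by (intro suminf_le) auto
  also have "\<dots> = B / (1 - q)" using sums_unique[OF sg] by simp
  finally show ?thesis .
qed
lemma mu_facts:
  assumes Ae: "\<bar>A\<bar> * \<epsilon> \<le> 1/2" and e0: "\<epsilon> > 0"
  shows "1/2 \<le> muA A \<epsilon>" "muA A \<epsilon> \<le> 3/2" "muA A \<epsilon> \<le> exp (\<bar>A\<bar> * \<epsilon>)"
    "\<bar>1 - muA A \<epsilon> powi (-2)\<bar> \<le> 10 * (\<bar>A\<bar> * \<epsilon>)"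
proof -
  have a1: "\<bar>A * \<epsilon>\<bar> \<le> 1/2" using Ae e0 by (simp add: abs_mult)
  show m1: "1/2 \<le> muA A \<epsilon>" unfolding muA_def using a1 by (simp add: abs_le_iff)
  show "muA A \<epsilon> \<le> 3/2" unfolding muA_def using a1 by (simp add: abs_le_iff)
  have "- (A*\<epsilon>) \<le> \<bar>A*\<epsilon>\<bar>" by (rule abs_ge_minus_self)
  also have "\<bar>A*\<epsilon>\<bar> = \<bar>A\<bar> * \<epsilon>" using e0 by (simp add: abs_mult)
  finally have "muA A \<epsilon> \<le> 1 + \<bar>A\<bar> * \<epsilon>" unfolding muA_def by linarith
  also have "\<dots> \<le> exp (\<bar>A\<bar> * \<epsilon>)" by (rule exp_ge_add_one_self)
  finally show "muA A \<epsilon> \<le> exp (\<bar>A\<bar> * \<epsilon>)" .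
  define u where "u = muA A \<epsilon>"
  have u0: "u \<ge> 1/2" using m1 by (simp add: u_def)
  have p: "u powi (-2) = 1/u^2" by (simp add: power_int_minus divide_inverse)
  have u2: "u^2 \<noteq> 0" using u0 by simp
  have "1 - u powi (-2) = (u^2 - 1) / u^2" unfolding p using u2 by (simp add: diff_divide_distrib)
  also have "u^2 - 1 = (- (A * \<epsilon>)) * (2 - A * \<epsilon>)" unfolding u_def muA_def by (simp add: power2_eq_square algebra_simps)
  finally have e: "\<bar>1 - u powi (-2)\<bar> = \<bar>A * \<epsilon>\<bar> * \<bar>2 - A * \<epsilon>\<bar> / u^2" by (simp add: abs_mult)
  have "\<bar>2 - A * \<epsilon>\<bar> \<le> 5/2" using a1 by (simp add: abs_le_iff)
  moreover have "1 / u^2 \<le> 4"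
  proof -
    have "(1/2)^2 \<le> u^2" using u0 by (intro power_mono) simp_all
    thus ?thesis using u0 by (simp add: field_simps)
  qed
  ultimately have "\<bar>A * \<epsilon>\<bar> * \<bar>2 - A * \<epsilon>\<bar> * (1 / u^2) \<le> \<bar>A * \<epsilon>\<bar> * (5/2) * 4"
    by (intro mult_mono) simp_all
  thus "\<bar>1 - muA A \<epsilon> powi (-2)\<bar> \<le> 10 * (\<bar>A\<bar> * \<epsilon>)" using e e0 unfolding u_def by (simp add: abs_mult mult_ac)
qed

lemma robin_tail:
  fixes g :: "nat \<Rightarrow> real"
  assumes Ae: "\<bar>A\<bar> * \<epsilon> \<le> 1/2" and e0: "\<epsilon> > 0" and b0: "b \<ge> 0" and m0: "m \<ge> 0"
    and D0: "D \<ge> 0" and S0: "S \<ge> 0" and A0: "A \<noteq> 0"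
    and g: "\<And>j. \<bar>g j\<bar> \<le> D * exp (-(b*m + 2*\<bar>A\<bar>*\<epsilon>) * (S + real j))"
  shows "summable (\<lambda>j. g j * muA A \<epsilon> ^ (j+2))"
    "\<bar>(1 - muA A \<epsilon> powi (-2)) * (\<Sum>j. g j * muA A \<epsilon> ^ (j+2))\<bar> \<le> 34 * D * exp (-b*m*S)"
proof -
  define \<mu> where "\<mu> = muA A \<epsilon>"
  define l where "l = b*m + 2*\<bar>A\<bar>*\<epsilon>"
  define u where "u = \<bar>A\<bar>*\<epsilon>"
  define q where "q = exp (-u)"
  have u0: "u > 0" using A0 e0 by (simp add: u_def)
  have q0: "0 \<le> q" "q < 1" using u0 by (simp_all add: q_def)
  have mf: "1/2 \<le> \<mu>" "\<mu> \<le> 3/2" "\<mu> \<le> exp u" "\<bar>1 - \<mu> powi (-2)\<bar> \<le> 10 * u"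
    using mu_facts[OF Ae e0] by (simp_all add: \<mu>_def u_def)
  have "2*\<bar>A\<bar>*\<epsilon> = 2*u" by (simp add: u_def)
  hence l0: "l \<ge> b * m" using u0 unfolding l_def by linarith
  have bm0: "b * m \<ge> 0" using b0 m0 by simp
  have r: "exp (-l) * \<mu> \<le> q"
  proof -
    have "exp (-l) * \<mu> \<le> exp (-l) * exp u" using mf(3) by (intro mult_left_mono) simp_all
    also have "\<dots> = exp (-(b*m) - u)" by (simp add: l_def u_def exp_add[symmetric])
    also have "\<dots> \<le> q" unfolding q_def using bm0 by simp
    finally show ?thesis .
  qed
  have r0: "exp (-l) * \<mu> \<ge> 0" using mf(1) by simp
  define B where "B = D * exp (-b*m*S) * \<mu>^2"
  have fb: "\<bar>g j * \<mu> ^ (j+2)\<bar> \<le> B * q^j" for j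
  proof -
    have "\<bar>g j * \<mu> ^ (j+2)\<bar> = \<bar>g j\<bar> * \<mu> ^ (j+2)" using mf(1) by (simp add: abs_mult)
    also have "\<dots> \<le> (D * exp (-l * (S + real j))) * \<mu> ^ (j+2)"
      using g[of j] mf(1) by (intro mult_right_mono) (simp_all add: l_def)
    also have "\<dots> = D * exp (-l * S) * \<mu>^2 * (exp (-l) * \<mu>)^j"
      by (simp add: power_add power_mult_distrib exp_add[symmetric] exp_of_nat_mult[symmetric] algebra_simps power2_eq_square)
    also have "\<dots> \<le> D * exp (-b*m*S) * \<mu>^2 * q^j"
    proof (rule mult_mono)
      show "D * exp (-l * S) * \<mu>^2 \<le> D * exp (-b*m*S) * \<mu>^2" using D0 l0 S0
        by (intro mult_right_mono mult_left_mono) (simp_all add: mult_right_mono)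
      show "(exp (-l) * \<mu>)^j \<le> q^j" using r r0 by (intro power_mono)
    qed (use D0 mf(1) r0 in simp_all)
    finally show ?thesis unfolding B_def .
  qed
  show "summable (\<lambda>j. g j * muA A \<epsilon> ^ (j+2))"
    using geom_summable[OF fb q0] unfolding \<mu>_def .
  have sb: "\<bar>\<Sum>j. g j * \<mu> ^ (j+2)\<bar> \<le> B / (1 - q)" by (rule geom_bound[OF fb q0])
  have "\<bar>(1 - \<mu> powi (-2)) * (\<Sum>j. g j * \<mu> ^ (j+2))\<bar> \<le> (10 * u) * (B / (1 - q))"
    unfolding abs_mult using mf(4) sb by (intro mult_mono) simp_all
  also have "\<dots> = 10 * (u / (1 - q)) * B" by simp
  also have "\<dots> \<le> 10 * (3/2) * (D * exp (-b*m*S) * (3/2)^2)"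
  proof (rule mult_mono)
    have "exp (-u) \<le> 1 / (1 + u)" using u0 by (intro exp_neg_le_inv) simp
    hence "u / (1 - q) \<le> 1 + u" using u0 q0 unfolding q_def by (simp add: field_simps)
    also have "1 + u \<le> 3/2" using Ae by (simp add: u_def)
    finally show "10 * (u / (1 - q)) \<le> 10 * (3/2)" by simp
    show "B \<le> D * exp (-b*m*S) * (3/2)^2" unfolding B_def using D0 mf by (intro mult_left_mono power_mono) simp_all
  qed (use D0 q0 u0 in \<open>simp_all add: B_def\<close>)
  also have "\<dots> \<le> 34 * D * exp (-b*m*S)"
  proof -
    have Z: "0 \<le> D * exp (-b*m*S)" using D0 by simp
    have "10 * (3/2) * (D * exp (-b*m*S) * (3/2)^2) = (135/4) * (D * exp (-b*m*S))" by (simp add: power2_eq_square)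
    moreover have "34 * D * exp (-b*m*S) = 34 * (D * exp (-b*m*S))" by simp
    ultimately show ?thesis using Z by linarith
  qed
  finally show "\<bar>(1 - muA A \<epsilon> powi (-2)) * (\<Sum>j. g j * muA A \<epsilon> ^ (j+2))\<bar> \<le> 34 * D * exp (-b*m*S)"
    unfolding \<mu>_def .
qed

lemma weight_le:
  fixes b m :: real and x y :: int and S :: real
  assumes "b \<ge> 0" "m \<ge> 0" "S \<ge> of_int \<bar>x - y\<bar>"
  shows "exp (-b*m*S) \<le> exp (-b * of_int \<bar>x - y\<bar> * m)"
proof -
  have "b*m* of_int \<bar>x - y\<bar> \<le> b*m*S" using assms by (intro mult_left_mono) simp_all
  thus ?thesis by (simp add: mult_ac)
qed

lemma abs3: "\<bar>(a::real) + b + c\<bar> \<le> \<bar>a\<bar> + \<bar>b\<bar> + \<bar>c\<bar>"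
  by (rule order_trans[OF abs_triangle_ineq add_right_mono[OF abs_triangle_ineq]])

lemma robin_point:
  fixes A \<epsilon> t b L :: real and x y :: int
  assumes t: "t \<ge> 0" and b0: "b \<ge> 0" and L0: "L \<ge> 0" and e0: "\<epsilon> > 0" and Ae: "\<bar>A\<bar> * \<epsilon> \<le> 1/2"
    and Lb: "b * mm t + 2*\<bar>A\<bar>*\<epsilon> \<le> L * mm t" and x0: "x \<ge> 0" and y0: "y \<ge> 0"
  shows "\<bar>robin_kernel A \<epsilon> t x y\<bar> \<le> 76 * Emax L * mm t * exp (-b * of_int \<bar>x - y\<bar> * mm t)"
proof -
  define m where "m = mm t"
  define W where "W = exp (-b * of_int \<bar>x - y\<bar> * m)"
  define \<mu> where "\<mu> = muA A \<epsilon>"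
  define \<kappa> where "\<kappa> = 1 - \<mu> powi (-2)"
  define D where "D = Emax L * (2 * m)"
  define H where "H = heat_kernel t"
  have m0: "m > 0" unfolding m_def by (rule mm_pos)
  have D0: "D \<ge> 0" unfolding D_def using Emax_pos[of L] m0 by simp
  have W0: "W \<ge> 0" unfolding W_def by simp
  have mf: "1/2 \<le> \<mu>" "\<mu> \<le> 3/2" using mu_facts[OF Ae e0] by (simp_all add: \<mu>_def)
  have bm0: "b * m \<ge> 0" using b0 m0 by simp
  have Ae0: "2*\<bar>A\<bar>*\<epsilon> \<ge> 0" using e0 by simp
  have bmL: "\<bar>b * m\<bar> \<le> L * m" using Lb abs_of_nonneg[OF bm0] Ae0 unfolding m_def by linarith
  have R: "robin_kernel A \<epsilon> t x y = H (x - y) + \<mu> * H (x + y + 1) + \<kappa> * (\<Sum>j. H (x + y + int j + 2) * \<mu> ^ (j + 2))"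
    unfolding robin_kernel_def H_def \<mu>_def \<kappa>_def ..
  have T1: "\<bar>H (x - y)\<bar> \<le> D * W"
  proof -
    define l1 where "l1 = (if y \<le> x then b * m else - (b * m))"
    have "\<bar>l1\<bar> \<le> L * mm t" using bmL unfolding l1_def m_def by auto
    hence "\<bar>H (x - y)\<bar> \<le> Emax L * (2 * mm t) * exp (-l1 * of_int (x - y))"
      unfolding H_def by (rule P_bound[OF t L0])
    moreover have "exp (-l1 * of_int (x - y)) = W" unfolding l1_def W_def by (auto simp: algebra_simps)
    ultimately show ?thesis unfolding D_def m_def by simp
  qed
  have T2: "\<bar>\<mu> * H (x + y + 1)\<bar> \<le> (3/2) * (D * W)"
  proof -
    have "\<bar>H (x + y + 1)\<bar> \<le> Emax L * (2 * mm t) * exp (-(b*m) * of_int (x + y + 1))"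
      unfolding H_def using bmL unfolding m_def by (intro P_bound[OF t L0]) simp
    also have "\<dots> \<le> D * W"
    proof -
      have w: "exp (-b*m* of_int (x+y+1)) \<le> W" unfolding W_def using b0 m0 x0 y0 by (intro weight_le) auto
      have "exp (-(b*m) * of_int (x + y + 1)) = exp (-b*m* of_int (x+y+1))" by simp
      thus ?thesis using w D0 unfolding D_def m_def by (simp add: mult_left_mono)
    qed
    finally have "\<bar>H (x + y + 1)\<bar> \<le> D * W" .
    hence hb: "\<bar>H (x + y + 1)\<bar> \<le> D * W" .
    have "\<bar>\<mu> * H (x + y + 1)\<bar> = \<mu> * \<bar>H (x + y + 1)\<bar>" using mf by (simp add: abs_mult)
    also have "\<dots> \<le> (3/2) * (D * W)" using mf hb by (intro mult_mono) simp_all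
    finally show ?thesis .
  qed
  have T3: "\<bar>\<kappa> * (\<Sum>j. H (x + y + int j + 2) * \<mu> ^ (j + 2))\<bar> \<le> 34 * (D * W)"
  proof (cases "A = 0")
    case True
    hence "\<kappa> = 0" unfolding \<kappa>_def \<mu>_def muA_def by simp
    thus ?thesis using D0 W0 by simp
  next
    case False
    define l3 where "l3 = b*m + 2*\<bar>A\<bar>*\<epsilon>"
    have "l3 \<ge> 0" using bm0 Ae0 unfolding l3_def by simp
    hence l3L: "\<bar>l3\<bar> \<le> L * mm t" using Lb unfolding l3_def m_def by simp
    have g: "\<bar>H (x + y + int j + 2)\<bar> \<le> D * exp (-(b*m + 2*\<bar>A\<bar>*\<epsilon>) * (of_int (x + y + 2) + real j))" for j
    proof -
      have "\<bar>H (x + y + int j + 2)\<bar> \<le> Emax L * (2 * mm t) * exp (-l3 * of_int (x + y + int j + 2))"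
        unfolding H_def by (rule P_bound[OF t L0 l3L])
      thus ?thesis unfolding D_def m_def l3_def by (simp add: algebra_simps)
    qed
    have "\<bar>\<kappa> * (\<Sum>j. H (x + y + int j + 2) * \<mu> ^ (j + 2))\<bar> \<le> 34 * D * exp (-b*m* of_int (x + y + 2))"
      unfolding \<kappa>_def \<mu>_def using x0 y0
      by (intro robin_tail(2)[OF Ae e0 b0 less_imp_le[OF m0] D0 _ False g[unfolded \<mu>_def]]) simp
    also have "\<dots> \<le> 34 * (D * W)"
    proof -
      have w: "exp (-b*m* of_int (x+y+2)) \<le> W" unfolding W_def using b0 m0 x0 y0 by (intro weight_le) auto
      thus ?thesis using D0 by (simp add: mult.assoc mult_left_mono)
    qed
    finally show ?thesis .
  qed
  have "\<bar>robin_kernel A \<epsilon> t x y\<bar> \<le> \<bar>H (x - y)\<bar> + \<bar>\<mu> * H (x + y + 1)\<bar> + \<bar>\<kappa> * (\<Sum>j. H (x + y + int j + 2) * \<mu> ^ (j + 2))\<bar>"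
    unfolding R by (rule abs3)
  also have "\<dots> \<le> D * W + (3/2) * (D * W) + 34 * (D * W)" using T1 T2 T3 by linarith
  also have "\<dots> \<le> 76 * Emax L * mm t * W" unfolding D_def m_def using Emax_pos[of L] mm_pos[of t] W0
    by (simp add: algebra_simps)
  finally show ?thesis unfolding W_def m_def .
qed
lemma robin_diff:
  fixes A \<epsilon> t b L :: real and x y n :: int
  assumes t: "t \<ge> 0" and b0: "b \<ge> 0" and L0: "L \<ge> 0" and e0: "\<epsilon> > 0" and Ae: "\<bar>A\<bar> * \<epsilon> \<le> 1/2"
    and Lb: "b * mm t + 2*\<bar>A\<bar>*\<epsilon> \<le> L * mm t" and x0: "x \<ge> 0" and y0: "y \<ge> 0"
    and xn: "x + n \<ge> 0" and n: "\<bar>of_int n\<bar> * mm t \<le> 1"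
  shows "\<bar>robin_kernel A \<epsilon> t (x + n) y - robin_kernel A \<epsilon> t x y\<bar>
    \<le> 37 * Emax L * KK L * mm t^2 * \<bar>of_int n\<bar> * exp (-b * of_int \<bar>x - y\<bar> * mm t)"
proof -
  define m where "m = mm t"
  define W where "W = exp (-b * of_int \<bar>x - y\<bar> * m)"
  define \<mu> where "\<mu> = muA A \<epsilon>"
  define \<kappa> where "\<kappa> = 1 - \<mu> powi (-2)"
  define D where "D = Emax L * (KK L * mm t^2 * \<bar>of_int n\<bar>)"
  define D' where "D' = Emax L * (2 * m)"
  define H where "H = heat_kernel t"
  have m0: "m > 0" unfolding m_def by (rule mm_pos)
  have D0: "D \<ge> 0" unfolding D_def using Emax_pos[of L] KK_ge[OF L0] by simp
  have D'0: "D' \<ge> 0" unfolding D'_def using Emax_pos[of L] m0 by simp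
  have W0: "W \<ge> 0" unfolding W_def by simp
  have mf: "1/2 \<le> \<mu>" "\<mu> \<le> 3/2" using mu_facts[OF Ae e0] by (simp_all add: \<mu>_def)
  have bm0: "b * m \<ge> 0" using b0 m0 by simp
  have Ae0: "2*\<bar>A\<bar>*\<epsilon> \<ge> 0" using e0 by simp
  have bmL: "\<bar>b * m\<bar> \<le> L * m" using Lb abs_of_nonneg[OF bm0] Ae0 unfolding m_def by linarith
  have R: "robin_kernel A \<epsilon> t z y = H (z - y) + \<mu> * H (z + y + 1) + \<kappa> * (\<Sum>j. H (z + y + int j + 2) * \<mu> ^ (j + 2))" for z
    unfolding robin_kernel_def H_def \<mu>_def \<kappa>_def ..
  have T1: "\<bar>H (x + n - y) - H (x - y)\<bar> \<le> D * W"
  proof -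
    define l1 where "l1 = (if y \<le> x then b * m else - (b * m))"
    have "\<bar>l1\<bar> \<le> L * mm t" using bmL unfolding l1_def m_def by auto
    hence B: "\<bar>H ((x - y) + n) - H (x - y)\<bar> \<le> Emax L * (KK L * mm t^2 * \<bar>of_int n\<bar>) * exp (-l1 * of_int (x - y))"
      unfolding H_def by (rule Q_bound[OF t L0 _ n])
    have E: "exp (-l1 * of_int (x - y)) = W" unfolding l1_def W_def by (auto simp: algebra_simps)
    have e: "H (x + n - y) = H ((x - y) + n)" by (rule arg_cong[where f=H]) simp
    show ?thesis unfolding D_def e using B E by simp
  qed
  have T2: "\<bar>\<mu> * (H (x + n + y + 1) - H (x + y + 1))\<bar> \<le> (3/2) * (D * W)"
  proof -
    have "\<bar>H ((x + y + 1) + n) - H (x + y + 1)\<bar> \<le> Emax L * (KK L * mm t^2 * \<bar>of_int n\<bar>) * exp (-(b*m) * of_int (x + y + 1))"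
      unfolding H_def using bmL unfolding m_def by (intro Q_bound[OF t L0 _ n]) simp
    also have "\<dots> \<le> D * W"
    proof -
      have w: "exp (-b*m* of_int (x+y+1)) \<le> W" unfolding W_def using b0 m0 x0 y0 by (intro weight_le) auto
      have "exp (-(b*m) * of_int (x + y + 1)) = exp (-b*m* of_int (x+y+1))" by simp
      thus ?thesis using w D0 unfolding D_def by (simp add: mult_left_mono)
    qed
    finally have hb: "\<bar>H (x + n + y + 1) - H (x + y + 1)\<bar> \<le> D * W" by (simp add: add_ac)
    have "\<bar>\<mu> * (H (x + n + y + 1) - H (x + y + 1))\<bar> = \<mu> * \<bar>H (x + n + y + 1) - H (x + y + 1)\<bar>" using mf by (simp add: abs_mult)
    also have "\<dots> \<le> (3/2) * (D * W)" using mf hb by (intro mult_mono) simp_all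
    finally show ?thesis .
  qed
  show ?thesis
  proof (cases "A = 0")
    case True
    hence k0: "\<kappa> = 0" unfolding \<kappa>_def \<mu>_def muA_def by simp
    have "robin_kernel A \<epsilon> t (x + n) y - robin_kernel A \<epsilon> t x y
        = (H (x + n - y) - H (x - y)) + \<mu> * (H (x + n + y + 1) - H (x + y + 1))"
      unfolding R k0 by (simp add: algebra_simps)
    hence "\<bar>robin_kernel A \<epsilon> t (x + n) y - robin_kernel A \<epsilon> t x y\<bar>
       \<le> \<bar>H (x + n - y) - H (x - y)\<bar> + \<bar>\<mu> * (H (x + n + y + 1) - H (x + y + 1))\<bar>"
      by (simp only: abs_triangle_ineq)
    also have "\<dots> \<le> D * W + (3/2) * (D * W)" using T1 T2 by linarith
    also have "\<dots> \<le> 37 * (D * W)" using D0 W0 by simp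
    finally show ?thesis unfolding D_def W_def m_def by (simp add: mult_ac)
  next
    case False
    define l3 where "l3 = b*m + 2*\<bar>A\<bar>*\<epsilon>"
    have "l3 \<ge> 0" using bm0 Ae0 unfolding l3_def by simp
    hence l3L: "\<bar>l3\<bar> \<le> L * mm t" using Lb unfolding l3_def m_def by simp
    have gz: "\<bar>H (z + y + int j + 2)\<bar> \<le> D' * exp (-(b*m + 2*\<bar>A\<bar>*\<epsilon>) * (of_int (z + y + 2) + real j))" for z j
    proof -
      have "\<bar>H (z + y + int j + 2)\<bar> \<le> Emax L * (2 * mm t) * exp (-l3 * of_int (z + y + int j + 2))"
        unfolding H_def by (rule P_bound[OF t L0 l3L])
      thus ?thesis unfolding D'_def m_def l3_def by (simp add: algebra_simps)
    qed
    have s1: "summable (\<lambda>j. H (x + n + y + int j + 2) * \<mu> ^ (j + 2))"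
      unfolding \<mu>_def using xn y0
      by (intro robin_tail(1)[OF Ae e0 b0 less_imp_le[OF m0] D'0 _ False gz[of "x+n", unfolded \<mu>_def]]) simp
    have s2: "summable (\<lambda>j. H (x + y + int j + 2) * \<mu> ^ (j + 2))"
      unfolding \<mu>_def using x0 y0
      by (intro robin_tail(1)[OF Ae e0 b0 less_imp_le[OF m0] D'0 _ False gz[of x, unfolded \<mu>_def]]) simp
    define G where "G j = H ((x + y + int j + 2) + n) - H (x + y + int j + 2)" for j
    have Gb: "\<bar>G j\<bar> \<le> D * exp (-(b*m + 2*\<bar>A\<bar>*\<epsilon>) * (of_int (x + y + 2) + real j))" for j
    proof -
      have "\<bar>G j\<bar> \<le> Emax L * (KK L * mm t^2 * \<bar>of_int n\<bar>) * exp (-l3 * of_int (x + y + int j + 2))"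
        unfolding G_def H_def by (rule Q_bound[OF t L0 l3L n])
      thus ?thesis unfolding D_def l3_def by (simp add: algebra_simps)
    qed
    have diffsum: "(\<Sum>j. H (x + n + y + int j + 2) * \<mu> ^ (j + 2)) - (\<Sum>j. H (x + y + int j + 2) * \<mu> ^ (j + 2))
        = (\<Sum>j. G j * \<mu> ^ (j + 2))"
    proof -
      have "(\<Sum>j. H (x + n + y + int j + 2) * \<mu> ^ (j + 2)) - (\<Sum>j. H (x + y + int j + 2) * \<mu> ^ (j + 2))
          = (\<Sum>j. H (x + n + y + int j + 2) * \<mu> ^ (j + 2) - H (x + y + int j + 2) * \<mu> ^ (j + 2))"
        using suminf_diff[OF s1 s2] by simp
      also have "\<dots> = (\<Sum>j. G j * \<mu> ^ (j + 2))"
        unfolding G_def by (simp add: algebra_simps)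
      finally show ?thesis .
    qed
    have T3: "\<bar>\<kappa> * (\<Sum>j. G j * \<mu> ^ (j + 2))\<bar> \<le> 34 * (D * W)"
    proof -
      have "\<bar>\<kappa> * (\<Sum>j. G j * \<mu> ^ (j + 2))\<bar> \<le> 34 * D * exp (-b*m* of_int (x + y + 2))"
        unfolding \<kappa>_def \<mu>_def using x0 y0
        by (intro robin_tail(2)[OF Ae e0 b0 less_imp_le[OF m0] D0 _ False Gb[unfolded \<mu>_def]]) simp
      also have "\<dots> \<le> 34 * (D * W)"
      proof -
        have w: "exp (-b*m* of_int (x+y+2)) \<le> W" unfolding W_def using b0 m0 x0 y0 by (intro weight_le) auto
        thus ?thesis using D0 by (simp add: mult.assoc mult_left_mono)
      qed
      finally show ?thesis .
    qed
    have "robin_kernel A \<epsilon> t (x + n) y - robin_kernel A \<epsilon> t x y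
        = (H (x + n - y) - H (x - y)) + \<mu> * (H (x + n + y + 1) - H (x + y + 1))
          + \<kappa> * ((\<Sum>j. H (x + n + y + int j + 2) * \<mu> ^ (j + 2)) - (\<Sum>j. H (x + y + int j + 2) * \<mu> ^ (j + 2)))"
      unfolding R by (simp add: algebra_simps)
    also have "\<dots> = (H (x + n - y) - H (x - y)) + \<mu> * (H (x + n + y + 1) - H (x + y + 1))
          + \<kappa> * (\<Sum>j. G j * \<mu> ^ (j + 2))" unfolding diffsum ..
    finally have "\<bar>robin_kernel A \<epsilon> t (x + n) y - robin_kernel A \<epsilon> t x y\<bar>
        \<le> \<bar>H (x + n - y) - H (x - y)\<bar> + \<bar>\<mu> * (H (x + n + y + 1) - H (x + y + 1))\<bar> + \<bar>\<kappa> * (\<Sum>j. G j * \<mu> ^ (j + 2))\<bar>"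
      by (simp only: abs3)
    also have "\<dots> \<le> D * W + (3/2) * (D * W) + 34 * (D * W)" using T1 T2 T3 by linarith
    also have "\<dots> \<le> 37 * (D * W)" using D0 W0 by simp
    finally show ?thesis unfolding D_def W_def m_def by (simp add: mult_ac)
  qed
qed
lemma min1_pow_mm:
  fixes t a :: real assumes t: "t \<ge> 0" and a: "a \<ge> 0"
  shows "min1_pow t a = mm t powr (2*a)"
proof (cases "t = 0")
  case True thus ?thesis unfolding min1_pow_def mm_def by simp
next
  case False
  hence tp: "t > 0" using t by simp
  show ?thesis
  proof (cases "t \<le> 1")
    case True
    have "t powr a \<le> 1" using True t a by (intro powr_le1) simp_all
    moreover have "t powr a > 0" using tp by simp
    ultimately have "t powr (-a) \<ge> 1" by (simp add: powr_minus_divide)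
    thus ?thesis using False True unfolding min1_pow_def mm_def by simp
  next
    case f2: False
    have "t powr a \<ge> 1" using f2 a by (intro ge_one_powr_ge_zero) simp_all
    hence "1 / t powr a \<le> 1 / 1" using tp by (intro divide_left_mono) simp_all
    hence "t powr (-a) \<le> 1" by (simp add: powr_minus_divide)
    hence "min1_pow t a = t powr (-a)" using False unfolding min1_pow_def by simp
    also have "\<dots> = (t powr (-(1/2))) powr (2*a)" by (simp add: powr_powr)
    also have "t powr (-(1/2)) = mm t" using f2 tp unfolding mm_def
      by (simp add: powr_minus_divide powr_half_sqrt)
    finally show ?thesis .
  qed
qed

lemma interp_small:
  fixes q v :: real assumes "0 < q" "q \<le> 1" "0 \<le> v" "v \<le> 1"
  shows "q \<le> q powr v"
proof -
  have "q powr 1 \<le> q powr v" using assms by (intro powr_mono') simp_all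
  thus ?thesis using assms by simp
qed

theorem mainTheorem5:
  fixes A T b :: real
  assumes "T > 0" and "b \<ge> 0"
  shows "\<exists>C. \<exists>\<epsilon>0 > 0. \<forall>\<epsilon>. 0 < \<epsilon> \<and> \<epsilon> < \<epsilon>0 \<longrightarrow>
     (\<forall>t v. \<forall>x y n :: int.
        0 \<le> t \<and> t \<le> T / \<epsilon>\<^sup>2 \<and> 0 \<le> v \<and> v \<le> 1 \<and> 0 \<le> x \<and> 0 \<le> y \<and> 0 \<le> x + n \<and>
        (\<bar>n\<bar> \<le> \<lceil>sqrt t\<rceil> \<or> b = 0) \<longrightarrow>
        \<bar>robin_kernel A \<epsilon> t (x + n) y - robin_kernel A \<epsilon> t x y\<bar>
          \<le> C * min1_pow t ((1 + v) / 2) * \<bar>real_of_int n\<bar> powr v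
              * exp (- b * real_of_int \<bar>x - y\<bar> * min1_pow t (1 / 2)))"
proof -
  have T0: "T > 0" and b0: "b \<ge> 0" using assms by simp_all
  define Ts where "Ts = max 1 (sqrt T)"
  define L where "L = b + 2*\<bar>A\<bar>*Ts"
  define C where "C = 152 * Emax L * exp (2*b) * KK L"
  define \<epsilon>0 where "\<epsilon>0 = min 1 (1/(2*\<bar>A\<bar>+1))"
  have Ts1: "Ts \<ge> 1" unfolding Ts_def by simp
  have L0: "L \<ge> 0" unfolding L_def using b0 Ts1 by simp
  have e00: "\<epsilon>0 > 0" unfolding \<epsilon>0_def by (simp add: add_pos_nonneg)
  show ?thesis
  proof (rule exI[of _ C], rule exI[of _ \<epsilon>0], intro conjI allI impI e00)
    fix \<epsilon> t v :: real and x y n :: int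
    assume e: "0 < \<epsilon> \<and> \<epsilon> < \<epsilon>0"
    assume h: "0 \<le> t \<and> t \<le> T / \<epsilon>\<^sup>2 \<and> 0 \<le> v \<and> v \<le> 1 \<and> 0 \<le> x \<and> 0 \<le> y \<and> 0 \<le> x + n \<and>
        (\<bar>n\<bar> \<le> \<lceil>sqrt t\<rceil> \<or> b = 0)"
    have e0: "\<epsilon> > 0" and e2: "\<epsilon> < 1/(2*\<bar>A\<bar>+1)" using e unfolding \<epsilon>0_def by (auto simp: min_def split: if_splits)
    have "1/(2*\<bar>A\<bar>+1) \<le> 1" by (simp add: add_pos_nonneg)
    hence e1: "\<epsilon> < 1" using e2 by linarith
    have t: "t \<ge> 0" and tT: "t \<le> T / \<epsilon>^2" and v0: "0 \<le> v" and v1: "v \<le> 1"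
      and x0: "0 \<le> x" and y0: "0 \<le> y" and xn: "0 \<le> x + n" and nb: "\<bar>n\<bar> \<le> \<lceil>sqrt t\<rceil> \<or> b = 0"
      using h by auto
    define m where "m = mm t"
    have m0: "m > 0" and m1: "m \<le> 1" unfolding m_def by (rule mm_pos, rule mm_le1)
    have Ae: "\<bar>A\<bar> * \<epsilon> \<le> 1/2"
    proof -
      have "\<epsilon> * (2*\<bar>A\<bar>+1) < 1" using e2 by (simp add: field_simps)
      thus ?thesis using e0 by (simp add: algebra_simps)
    qed
    have eTs: "\<epsilon> \<le> Ts * m"
    proof (cases "t \<le> 1")
      case True thus ?thesis using e1 Ts1 unfolding m_def mm_def by simp
    next
      case False
      hence tp: "t > 1" by simp
      have "\<epsilon>^2 * t \<le> T" using tT e0 by (simp add: field_simps)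
      hence "sqrt (\<epsilon>^2 * t) \<le> sqrt T" by (rule real_sqrt_le_mono)
      hence "\<epsilon> * sqrt t \<le> sqrt T" using e0 tp by (simp add: real_sqrt_mult)
      hence "\<epsilon> * sqrt t \<le> Ts" unfolding Ts_def by linarith
      hence "\<epsilon> \<le> Ts / sqrt t" using tp by (simp add: field_simps)
      thus ?thesis using tp unfolding m_def mm_def by simp
    qed
    have Lb: "b * mm t + 2*\<bar>A\<bar>*\<epsilon> \<le> L * mm t"
    proof -
      have "2*\<bar>A\<bar>*\<epsilon> \<le> 2*\<bar>A\<bar>*(Ts * m)" using eTs by (intro mult_left_mono) simp_all
      thus ?thesis unfolding L_def m_def by (simp add: algebra_simps)
    qed
    define W where "W = exp (-b * of_int \<bar>x - y\<bar> * m)"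
    have W0: "W \<ge> 0" unfolding W_def by simp
    define N where "N = \<bar>(of_int n :: real)\<bar>"
    have N0: "N \<ge> 0" unfolding N_def by simp
    have rhs: "C * min1_pow t ((1 + v) / 2) * \<bar>real_of_int n\<bar> powr v
              * exp (- b * real_of_int \<bar>x - y\<bar> * min1_pow t (1 / 2)) = C * (m * (m * N) powr v) * W"
    proof -
      have q: "2*((1+v)/2) = 1 + v" by simp
      have "min1_pow t ((1 + v) / 2) = m powr (1 + v)" using min1_pow_mm[OF t, of "(1+v)/2", unfolded q] v0 unfolding m_def by simp
      also have "\<dots> = m * m powr v" using m0 by (simp add: powr_add)
      finally have p1: "min1_pow t ((1 + v) / 2) = m * m powr v" .
      have p2: "min1_pow t (1/2) = m" using min1_pow_mm[OF t, of "1/2"] m0 unfolding m_def by simp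
      have "(m * N) powr v = m powr v * N powr v" using m0 N0 by (simp add: powr_mult)
      thus ?thesis unfolding p1 p2 W_def N_def by (simp add: mult_ac)
    qed
    have Cge: "C \<ge> 0" unfolding C_def using Emax_pos[of L] KK_ge[OF L0] by simp
    have main: "\<bar>robin_kernel A \<epsilon> t (x + n) y - robin_kernel A \<epsilon> t x y\<bar> \<le> C * (m * (m * N) powr v) * W"
    proof (cases "n = 0")
      case True thus ?thesis using Cge m0 W0 by (simp add: N_def)
    next
      case nz: False
      hence N1: "N \<ge> 1" unfolding N_def by linarith
      show ?thesis
      proof (cases "N * m \<le> 1")
        case True
        have nm: "\<bar>of_int n\<bar> * mm t \<le> 1" using True unfolding N_def m_def .
        have "\<bar>robin_kernel A \<epsilon> t (x + n) y - robin_kernel A \<epsilon> t x y\<bar>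
            \<le> 37 * Emax L * KK L * mm t^2 * \<bar>of_int n\<bar> * exp (-b * of_int \<bar>x - y\<bar> * mm t)"
          by (rule robin_diff[OF t b0 L0 e0 Ae Lb x0 y0 xn nm])
        also have "\<dots> = (37 * Emax L * KK L) * (m * (m * N)) * W" unfolding m_def N_def W_def
          by (simp add: power2_eq_square mult_ac)
        also have "\<dots> \<le> C * (m * (m * N) powr v) * W"
        proof -
          have eb: "exp (2*b) \<ge> 1" using b0 by simp
          hence "37 \<le> 152 * exp (2*b)" by linarith
          hence "37 * (Emax L * KK L) \<le> (152 * exp (2*b)) * (Emax L * KK L)"
            using Emax_pos[of L] KK_ge[OF L0] by (intro mult_right_mono) simp_all
          hence c1: "37 * Emax L * KK L \<le> C" unfolding C_def by (simp add: mult_ac)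
          have c2: "m * (m * N) \<le> m * (m * N) powr v" using m0 N1 True v0 v1
            by (intro mult_left_mono interp_small) (simp_all add: mult.commute)
          have c3: "0 \<le> m * (m * N)" using m0 N0 by simp
          show ?thesis by (rule mult_right_mono[OF mult_mono[OF c1 c2 Cge c3] W0])
        qed
        finally show ?thesis .
      next
        case False
        hence Nm: "N * m > 1" by simp
        have W': "exp (-b * of_int \<bar>x + n - y\<bar> * m) \<le> exp (2*b) * W"
        proof -
          have bmN: "b * (m * N) \<le> 2 * b"
          proof (cases "b = 0")
            case True thus ?thesis by simp
          next
            case False
            hence nle: "\<bar>n\<bar> \<le> \<lceil>sqrt t\<rceil>" using nb by simp
            hence "N \<le> sqrt t + 1" unfolding N_def
              by (metis of_int_abs of_int_ceiling_le_add_one of_int_le_iff order_trans)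
            hence "m * N \<le> m * (sqrt t + 1)" using m0 by (intro mult_left_mono) simp_all
            also have "\<dots> \<le> 2"
            proof (cases "t \<le> 1")
              case True thus ?thesis unfolding m_def mm_def using t by simp
            next
              case False thus ?thesis unfolding m_def mm_def by (simp add: field_simps)
            qed
            finally have "m * N \<le> 2" .
            hence "b * (m * N) \<le> b * 2" by (rule mult_left_mono[OF _ b0])
            thus ?thesis by simp
          qed
          have "of_int \<bar>x - y\<bar> \<le> of_int \<bar>x + n - y\<bar> + N" unfolding N_def by simp
          hence "b * m * of_int \<bar>x - y\<bar> \<le> b * m * (of_int \<bar>x + n - y\<bar> + N)"
            using b0 m0 by (intro mult_left_mono) simp_all
          hence "-b * of_int \<bar>x + n - y\<bar> * m \<le> 2*b + (-b * of_int \<bar>x - y\<bar> * m)"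
            using bmN by (simp add: algebra_simps)
          hence "exp (-b * of_int \<bar>x + n - y\<bar> * m) \<le> exp (2*b + (-b * of_int \<bar>x - y\<bar> * m))"
            by (simp only: exp_le_cancel_iff)
          hence "exp (-b * of_int \<bar>x + n - y\<bar> * m) \<le> exp (2*b) * exp (-b * of_int \<bar>x - y\<bar> * m)"
            by (simp only: exp_add)
          thus ?thesis unfolding W_def .
        qed
        have P1: "\<bar>robin_kernel A \<epsilon> t (x + n) y\<bar> \<le> 76 * Emax L * m * (exp (2*b) * W)"
        proof -
          have "\<bar>robin_kernel A \<epsilon> t (x + n) y\<bar> \<le> 76 * Emax L * mm t * exp (-b * of_int \<bar>x + n - y\<bar> * mm t)"
            by (rule robin_point[OF t b0 L0 e0 Ae Lb xn y0])
          also have "\<dots> \<le> 76 * Emax L * m * (exp (2*b) * W)" using W' Emax_pos[of L] m0 unfolding m_def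
            by (intro mult_left_mono) simp_all
          finally show ?thesis .
        qed
        have P2: "\<bar>robin_kernel A \<epsilon> t x y\<bar> \<le> 76 * Emax L * m * (exp (2*b) * W)"
        proof -
          have "\<bar>robin_kernel A \<epsilon> t x y\<bar> \<le> 76 * Emax L * mm t * exp (-b * of_int \<bar>x - y\<bar> * mm t)"
            by (rule robin_point[OF t b0 L0 e0 Ae Lb x0 y0])
          also have "\<dots> = 76 * Emax L * m * (1 * W)" unfolding m_def W_def by simp
          also have "\<dots> \<le> 76 * Emax L * m * (exp (2*b) * W)" using W0 b0 Emax_pos[of L] m0
            by (intro mult_left_mono mult_right_mono) simp_all
          finally show ?thesis .
        qed
        have "\<bar>robin_kernel A \<epsilon> t (x + n) y - robin_kernel A \<epsilon> t x y\<bar>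
            \<le> \<bar>robin_kernel A \<epsilon> t (x + n) y\<bar> + \<bar>robin_kernel A \<epsilon> t x y\<bar>" by (rule abs_triangle_ineq4)
        also have "\<dots> \<le> (152 * Emax L * exp (2*b)) * (m * 1) * W" using P1 P2 by (simp add: algebra_simps)
        also have "\<dots> \<le> C * (m * (m * N) powr v) * W"
        proof -
          have "152 * Emax L * exp (2*b) * 1 \<le> 152 * Emax L * exp (2*b) * KK L"
            using Emax_pos[of L] KK_ge[OF L0] by (intro mult_left_mono) simp_all
          hence c1: "152 * Emax L * exp (2*b) \<le> C" unfolding C_def by simp
          have "1 \<le> (m * N) powr v" using Nm v0 by (intro ge_one_powr_ge_zero) (simp_all add: mult.commute)
          hence c2: "m * 1 \<le> m * (m * N) powr v" using m0 by (intro mult_left_mono) simp_all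
          have c3: "0 \<le> m * 1" using m0 by simp
          show ?thesis by (rule mult_right_mono[OF mult_mono[OF c1 c2 Cge c3] W0])
        qed
        finally show ?thesis .
      qed
    qed
    show "\<bar>robin_kernel A \<epsilon> t (x + n) y - robin_kernel A \<epsilon> t x y\<bar>
          \<le> C * min1_pow t ((1 + v) / 2) * \<bar>real_of_int n\<bar> powr v
              * exp (- b * real_of_int \<bar>x - y\<bar> * min1_pow t (1 / 2))"
      unfolding rhs by (rule main)
  qed
qed

end
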